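(* Let $\rho:Y\to X$ be a local homeomorphism between locally compact Hausdorff spaces and $m\ge0$. Let $A^m=\{\frac1{m+1}(\delta_{y_0}+\dots+\delta_{y_m})\in P(Y): y_i\neq y_j\text{ for }i\neq j\}$ with the subspace topology of $P(Y)$, and $B^m=\{(y_0,\dots,y_m)\in Y^{\times_X^{m+1}}:y_i\ne y_j\text{ for }i\neq j\}/S_{m+1}$, where $Y^{\times_X^{m+1}}$ is the fibre product of $m+1$ copies of $Y$ over $X$ and the symmetric group $S_{m+1}$ acts by permutation; write $[y_0,\dots,y_m]$ for the class of $(y_0,\dots,y_m)$. Then: (1) the map $\phi:A^m\to B^m$, $\frac1{m+1}(\delta_{y_0}+\dots+\delta_{y_m})\mapsto[y_0,\dots,y_m]$ is a homeomorphism; (2) $\tilde\rho|_{A^m}:A^m\to X$ is a local homeomorphism; (3) if $(Y,\Delta)$ is an $X$-simplicial complex (with structure map $\rho$) satisfying hypothesis $(H_2)$, then $A^m\cap|\Delta|$ is closed in $A^m$.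
   Context: $P(Y)$ is the set of positive Radon measures $\mu$ on $Y$ with $\mu(Y)=1$ supported in a single fibre $\rho^{-1}(x)$, with the weak-$*$ topology from $C_c(Y,\mathbb R)$; $\tilde\rho(\mu)=x$ where $\rho_*\mu=\delta_x$. An $X$-simplicial complex is a pair $(Y,\Delta)$ with $\rho:Y\to X$ a local homeomorphism and $\Delta$ a family of finite (nonempty) subsets of $Y$ of bounded cardinality, each contained in some fibre $\rho^{-1}(x)$, and closed under taking nonempty subsets. Its geometric realization is $|\Delta|=\{\mu\in P(Y):\mathrm{supp}(\mu)\in\Delta\}$ with the subspace topology. Hypothesis $(H_2)$: whenever $(y^{(0)}_\lambda)_\lambda,\dots,(y^{(k)}_\lambda)_\lambda$ are nets in $Y$ converging to $y^{(0)},\dots,y^{(k)}$ and $\{y^{(0)}_\lambda,\dots,y^{(k)}_\lambda\}\in\Delta$ for all $\lambda$, then $\{y^{(0)},\dots,y^{(k)}\}\in\Delta$. *)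

theory Defs
  imports "HOL-Analysis.Analysis" "HOL-Probability.Probability"
begin

definition borel_of :: "'a topology \<Rightarrow> 'a measure" where
  "borel_of Y = sigma (topspace Y) {U. openin Y U}"

definition local_homeo :: "'a topology \<Rightarrow> 'b topology \<Rightarrow> ('a \<Rightarrow> 'b) \<Rightarrow> bool" where
  "local_homeo Y X f \<longleftrightarrow> f ` topspace Y \<subseteq> topspace X \<and>
     (\<forall>y\<in>topspace Y. \<exists>U. openin Y U \<and> y \<in> U \<and> openin X (f ` U) \<and>
        homeomorphic_map (subtopology Y U) (subtopology X (f ` U)) f)"

definition radon :: "'a topology \<Rightarrow> 'a measure \<Rightarrow> bool" where
  "radon Y \<mu> \<longleftrightarrow> space \<mu> = topspace Y \<and> sets \<mu> = sets (borel_of Y) \<and>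
     (\<forall>K. compactin Y K \<longrightarrow> emeasure \<mu> K < \<infinity>) \<and>
     (\<forall>B\<in>sets \<mu>. emeasure \<mu> B = (INF U\<in>{U. openin Y U \<and> B \<subseteq> U}. emeasure \<mu> U)) \<and>
     (\<forall>U. openin Y U \<longrightarrow> emeasure \<mu> U = (SUP K\<in>{K. compactin Y K \<and> K \<subseteq> U}. emeasure \<mu> K))"

definition supp :: "'a topology \<Rightarrow> 'a measure \<Rightarrow> 'a set" where
  "supp Y \<mu> = topspace Y - \<Union>{U. openin Y U \<and> emeasure \<mu> U = 0}"

definition fibre :: "'a topology \<Rightarrow> ('a \<Rightarrow> 'b) \<Rightarrow> 'b \<Rightarrow> 'a set" where
  "fibre Y \<rho> x = {y \<in> topspace Y. \<rho> y = x}"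

definition PY :: "'a topology \<Rightarrow> 'b topology \<Rightarrow> ('a \<Rightarrow> 'b) \<Rightarrow> 'a measure set" where
  "PY Y X \<rho> = {\<mu>. radon Y \<mu> \<and> emeasure \<mu> (topspace Y) = 1 \<and>
                  (\<exists>x\<in>topspace X. supp Y \<mu> \<subseteq> fibre Y \<rho> x)}"

definition Cc :: "'a topology \<Rightarrow> ('a \<Rightarrow> real) set" where
  "Cc Y = {f. continuous_map Y euclideanreal f \<and> compactin Y (Y closure_of {y\<in>topspace Y. f y \<noteq> 0})}"

definition PY_top :: "'a topology \<Rightarrow> 'b topology \<Rightarrow> ('a \<Rightarrow> 'b) \<Rightarrow> 'a measure topology" where
  "PY_top Y X \<rho> = subtopology
     (topology_generated_by {{\<mu>. integral\<^sup>L \<mu> f \<in> V} | f V. f \<in> Cc Y \<and> open V})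
     (PY Y X \<rho>)"

definition rho_tilde :: "'a topology \<Rightarrow> 'b topology \<Rightarrow> ('a \<Rightarrow> 'b) \<Rightarrow> 'a measure \<Rightarrow> 'b" where
  "rho_tilde Y X \<rho> \<mu> = (THE x. distr \<mu> (borel_of X) \<rho> = return (borel_of X) x)"

definition dirac_avg :: "'a topology \<Rightarrow> nat \<Rightarrow> (nat \<Rightarrow> 'a) \<Rightarrow> 'a measure" where
  "dirac_avg Y m t = measure_of (topspace Y) (sets (borel_of Y))
     (\<lambda>A. ennreal ((\<Sum>i\<le>m. indicator A (t i)) / real (m + 1)))"

text \<open>Fibre product Y^{x_X (m+1)} minus the fat diagonal, as a subspace of the product.\<close>
definition conf_top :: "'a topology \<Rightarrow> ('a \<Rightarrow> 'b) \<Rightarrow> nat \<Rightarrow> (nat \<Rightarrow> 'a) topology" where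
  "conf_top Y \<rho> m = subtopology (product_topology (\<lambda>i. Y) {..m})
     {t. inj_on t {..m} \<and> (\<forall>i\<le>m. \<forall>j\<le>m. \<rho> (t i) = \<rho> (t j))}"

text \<open>Class [y_0,...,y_m] of a tuple under S_{m+1}: represented by the set {y_0,...,y_m}.\<close>
definition conf_class :: "nat \<Rightarrow> (nat \<Rightarrow> 'a) \<Rightarrow> 'a set" where
  "conf_class m t = t ` {..m}"

definition B_top :: "'a topology \<Rightarrow> ('a \<Rightarrow> 'b) \<Rightarrow> nat \<Rightarrow> 'a set topology" where
  "B_top Y \<rho> m = topology (\<lambda>U. U \<subseteq> conf_class m ` topspace (conf_top Y \<rho> m) \<and>
     openin (conf_top Y \<rho> m) {t \<in> topspace (conf_top Y \<rho> m). conf_class m t \<in> U})"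

definition A_set :: "'a topology \<Rightarrow> 'b topology \<Rightarrow> ('a \<Rightarrow> 'b) \<Rightarrow> nat \<Rightarrow> 'a measure set" where
  "A_set Y X \<rho> m = {\<mu> \<in> PY Y X \<rho>. \<exists>t. inj_on t {..m} \<and> (\<forall>i\<le>m. t i \<in> topspace Y) \<and> \<mu> = dirac_avg Y m t}"

definition A_top :: "'a topology \<Rightarrow> 'b topology \<Rightarrow> ('a \<Rightarrow> 'b) \<Rightarrow> nat \<Rightarrow> 'a measure topology" where
  "A_top Y X \<rho> m = subtopology (PY_top Y X \<rho>) (A_set Y X \<rho> m)"

definition phi :: "'a topology \<Rightarrow> ('a \<Rightarrow> 'b) \<Rightarrow> nat \<Rightarrow> 'a measure \<Rightarrow> 'a set" where
  "phi Y \<rho> m \<mu> = (THE b. \<exists>t\<in>topspace (conf_top Y \<rho> m). \<mu> = dirac_avg Y m t \<and> b = conf_class m t)"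

definition X_simplicial_complex :: "'a topology \<Rightarrow> ('a \<Rightarrow> 'b) \<Rightarrow> 'a set set \<Rightarrow> bool" where
  "X_simplicial_complex Y \<rho> \<Delta> \<longleftrightarrow>
     (\<forall>\<sigma>\<in>\<Delta>. finite \<sigma> \<and> \<sigma> \<noteq> {} \<and> \<sigma> \<subseteq> topspace Y \<and> (\<exists>x. \<sigma> \<subseteq> fibre Y \<rho> x)) \<and>
     (\<exists>N. \<forall>\<sigma>\<in>\<Delta>. card \<sigma> \<le> N) \<and>
     (\<forall>\<sigma>\<in>\<Delta>. \<forall>\<tau>. \<tau> \<subseteq> \<sigma> \<and> \<tau> \<noteq> {} \<longrightarrow> \<tau> \<in> \<Delta>)"

definition geom_real :: "'a topology \<Rightarrow> 'b topology \<Rightarrow> ('a \<Rightarrow> 'b) \<Rightarrow> 'a set set \<Rightarrow> 'a measure set" where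
  "geom_real Y X \<rho> \<Delta> = {\<mu> \<in> PY Y X \<rho>. supp Y \<mu> \<in> \<Delta>}"

text \<open>Hypothesis (H2), with nets of (k+1)-tuples expressed as proper filters on lists:
  the net (y^(0)_l,...,y^(k)_l) is the (eventual) family of lists, component i is l!i.\<close>
definition H2 :: "'a topology \<Rightarrow> 'a set set \<Rightarrow> bool" where
  "H2 Y \<Delta> \<longleftrightarrow> (\<forall>(F :: 'a list filter) z. F \<noteq> bot \<and>
      eventually (\<lambda>l. length l = length z \<and> set l \<in> \<Delta>) F \<and>
      (\<forall>i<length z. limitin Y (\<lambda>l. l ! i) (z ! i) F) \<longrightarrow> set z \<in> \<Delta>)"

end

theory Submission
  imports Defs
begin

lemma sets_borel_of: "sets (borel_of Y) = sigma_sets (topspace Y) {U. openin Y U}"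
  unfolding borel_of_def by (rule sets_measure_of) (auto dest: openin_subset)

lemma space_borel_of[simp]: "space (borel_of Y) = topspace Y"
  unfolding borel_of_def by (rule space_measure_of) (auto dest: openin_subset)

lemma open_in_borel_of: "openin Y U \<Longrightarrow> U \<in> sets (borel_of Y)"
  by (auto simp: sets_borel_of)

lemma closed_in_borel_of: "closedin Y C \<Longrightarrow> C \<in> sets (borel_of Y)"
proof -
  assume "closedin Y C"
  then have "C = topspace Y - (topspace Y - C)" "openin Y (topspace Y - C)"
    by (auto simp: closedin_def)
  then show ?thesis
    by (metis open_in_borel_of sets.compl_sets space_borel_of)
qed

lemma continuous_measurable_borel_of:
  assumes "continuous_map Y X f"
  shows "f \<in> measurable (borel_of Y) (borel_of X)"
  unfolding borel_of_def[of X]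
proof (rule measurable_measure_of)
  show "{U. openin X U} \<subseteq> Pow (topspace X)" by (auto dest: openin_subset)
  show "f \<in> space (borel_of Y) \<rightarrow> topspace X"
    using assms by (auto simp: continuous_map_def)
  fix U assume "U \<in> {U. openin X U}"
  then have "openin Y {x \<in> topspace Y. f x \<in> U}"
    using assms by (auto simp: continuous_map_def)
  moreover have "f -` U \<inter> space (borel_of Y) = {x \<in> topspace Y. f x \<in> U}" by auto
  ultimately show "f -` U \<inter> space (borel_of Y) \<in> sets (borel_of Y)"
    by (simp add: open_in_borel_of)
qed

lemma continuous_borel_measurable:
  assumes "continuous_map Y euclideanreal f"
  shows "f \<in> borel_measurable (borel_of Y)"
proof (rule borel_measurableI)
  fix S :: "real set" assume "open S"
  then have "openin Y {x \<in> topspace Y. f x \<in> S}"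
    using assms by (auto simp: continuous_map_def)
  moreover have "f -` S \<inter> space (borel_of Y) = {x \<in> topspace Y. f x \<in> S}" by auto
  ultimately show "f -` S \<inter> space (borel_of Y) \<in> sets (borel_of Y)"
    by (simp add: open_in_borel_of)
qed

lemma ennreal_nat_div: "ennreal (real a / real (Suc m)) = of_nat a / of_nat (Suc m)"
  by (metis divide_ennreal ennreal_of_nat_eq_real_of_nat of_nat_0_le_iff of_nat_0_less_iff zero_less_Suc)

lemma ennreal_nat_div': "ennreal (real a / (1 + real m)) = of_nat a / (1 + of_nat m)"
  using ennreal_nat_div[of a m] by (simp add: add.commute)

lemma dirac_avg_distr:
  assumes t: "\<And>i. i \<le> m \<Longrightarrow> t i \<in> topspace Y"
  shows "dirac_avg Y m t = distr (uniform_count_measure {..m}) (borel_of Y) t"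
proof -
  let ?N = "distr (uniform_count_measure {..m}) (borel_of Y) t"
  have meas: "t \<in> measurable (uniform_count_measure {..m}) (borel_of Y)"
    using t by (simp add: measurable_cong_sets[OF sets_uniform_count_measure_count_space refl])
  have "?N = measure_of (topspace Y) (sets (borel_of Y)) (emeasure ?N)"
    by (metis measure_of_of_measure sets_distr space_distr space_borel_of)
  also have "\<dots> = dirac_avg Y m t"
    unfolding dirac_avg_def
  proof (rule measure_of_eq)
    show "sets (borel_of Y) \<subseteq> Pow (topspace Y)"
      by (metis sets.space_closed space_borel_of)
    fix A assume "A \<in> sigma_sets (topspace Y) (sets (borel_of Y))"
    then have A: "A \<in> sets (borel_of Y)"
      by (metis sets.sigma_sets_eq space_borel_of)
    have "emeasure ?N A = emeasure (uniform_count_measure {..m}) (t -` A \<inter> {..m})"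
      using meas A by (simp add: emeasure_distr space_uniform_count_measure)
    also have "\<dots> = ennreal (real (card (t -` A \<inter> {..m})) / real (Suc m))"
      using emeasure_uniform_count_measure[of "{..m}" "t -` A \<inter> {..m}"] card_atMost[of m] by (metis finite_atMost inf_le2)
    also have "\<dots> = ennreal ((\<Sum>i\<le>m. indicator A (t i)) / real (m + 1))"
    proof -
      have "(\<Sum>i\<le>m. indicator A (t i)) = (\<Sum>i\<in>{..m}. indicator (t -` A) i :: real)"
        by (simp add: indicator_def)
      also have "\<dots> = real (card ({..m} \<inter> t -` A))"
        using arg_cong[OF sum_indicator_eq_card[of "{..m}" "t -` A"], of real]
        by (simp add: of_nat_sum real_of_nat_indicator)
      finally show ?thesis by (simp add: Int_commute)
    qed
    finally show "emeasure ?N A = ennreal ((\<Sum>i\<le>m. indicator A (t i)) / real (m + 1))" .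
  qed
  finally show ?thesis by simp
qed

lemma emeasure_dirac_avg:
  assumes t: "\<And>i. i \<le> m \<Longrightarrow> t i \<in> topspace Y" and A: "A \<in> sets (borel_of Y)"
  shows "emeasure (dirac_avg Y m t) A = ennreal (real (card {i\<in>{..m}. t i \<in> A}) / real (Suc m))"
proof -
  have meas: "t \<in> measurable (uniform_count_measure {..m}) (borel_of Y)"
    using t by (simp add: measurable_cong_sets[OF sets_uniform_count_measure_count_space refl])
  have "emeasure (dirac_avg Y m t) A = emeasure (uniform_count_measure {..m}) (t -` A \<inter> {..m})"
    using meas A by (simp add: dirac_avg_distr[OF t] emeasure_distr space_uniform_count_measure)
  also have "\<dots> = ennreal (real (card (t -` A \<inter> {..m})) / real (Suc m))"
    using emeasure_uniform_count_measure[of "{..m}" "t -` A \<inter> {..m}"] card_atMost[of m] by (metis finite_atMost inf_le2)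
  also have "t -` A \<inter> {..m} = {i\<in>{..m}. t i \<in> A}" by auto
  finally show ?thesis .
qed

lemma sets_dirac_avg[simp]: "sets (dirac_avg Y m t) = sets (borel_of Y)"
  unfolding dirac_avg_def by (metis sets.sigma_sets_eq sets.space_closed sets_measure_of space_borel_of)

lemma space_dirac_avg[simp]: "space (dirac_avg Y m t) = topspace Y"
  unfolding dirac_avg_def by (metis sets.space_closed space_measure_of space_borel_of)

lemma integral_dirac_avg:
  assumes t: "\<And>i. i \<le> m \<Longrightarrow> t i \<in> topspace Y" and f: "continuous_map Y euclideanreal f"
  shows "integral\<^sup>L (dirac_avg Y m t) f = (\<Sum>i\<le>m. f (t i)) / real (Suc m)"
proof -
  have meas: "t \<in> measurable (uniform_count_measure {..m}) (borel_of Y)"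
    using t by (simp add: measurable_cong_sets[OF sets_uniform_count_measure_count_space refl])
  show ?thesis
    using integral_distr[OF meas continuous_borel_measurable[OF f]]
    by (simp add: dirac_avg_distr[OF t] integral_uniform_count_measure)
qed

lemma topspace_conf_top:
  "topspace (conf_top Y \<rho> m) = {t \<in> PiE {..m} (\<lambda>_. topspace Y). inj_on t {..m} \<and> (\<forall>i\<le>m. \<forall>j\<le>m. \<rho> (t i) = \<rho> (t j))}"
  unfolding conf_top_def by (auto simp: topspace_product_topology)

lemma local_homeo_continuous:
  assumes "local_homeo Y X \<rho>"
  shows "continuous_map Y X \<rho>"
  unfolding continuous_map_def
proof (intro conjI allI impI)
  show "\<rho> \<in> topspace Y \<rightarrow> topspace X" using assms by (auto simp: local_homeo_def)
  fix Ov assume Ov: "openin X Ov"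
  show "openin Y {y \<in> topspace Y. \<rho> y \<in> Ov}"
  proof (subst openin_subopen, intro ballI)
    fix y assume y: "y \<in> {y \<in> topspace Y. \<rho> y \<in> Ov}"
    then obtain U where U: "openin Y U" "y \<in> U" "openin X (\<rho> ` U)"
      "homeomorphic_map (subtopology Y U) (subtopology X (\<rho> ` U)) \<rho>"
      using assms unfolding local_homeo_def by blast
    then have "continuous_map (subtopology Y U) X \<rho>"
      using homeomorphic_imp_continuous_map continuous_map_in_subtopology by blast
    then have "openin (subtopology Y U) {x \<in> topspace (subtopology Y U). \<rho> x \<in> Ov}"
      using Ov by (auto simp: continuous_map_def)
    then have "openin Y {x \<in> topspace (subtopology Y U). \<rho> x \<in> Ov}"
      using U(1) openin_trans_full by blast
    moreover have "{x \<in> topspace (subtopology Y U). \<rho> x \<in> Ov} \<subseteq> {y \<in> topspace Y. \<rho> y \<in> Ov}"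
      by auto
    moreover have "y \<in> {x \<in> topspace (subtopology Y U). \<rho> x \<in> Ov}"
      using y U openin_subset by fastforce
    ultimately show "\<exists>T. openin Y T \<and> y \<in> T \<and> T \<subseteq> {y \<in> topspace Y. \<rho> y \<in> Ov}"
      by blast
  qed
qed

lemma finite_closedin_Hausdorff:
  assumes "Hausdorff_space Y" "finite S" "S \<subseteq> topspace Y"
  shows "closedin Y S"
  using assms compactin_imp_closedin finite_imp_compactin by blast

lemma emeasure_dirac_avg_zero_iff:
  assumes t: "\<And>i. i \<le> m \<Longrightarrow> t i \<in> topspace Y" and A: "A \<in> sets (borel_of Y)"
  shows "emeasure (dirac_avg Y m t) A = 0 \<longleftrightarrow> (\<forall>i\<le>m. t i \<notin> A)"
proof -
  have "emeasure (dirac_avg Y m t) A = 0 \<longleftrightarrow> card {i\<in>{..m}. t i \<in> A} = 0"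
    by (simp add: emeasure_dirac_avg[OF t A] ennreal_eq_0_iff divide_le_0_iff)
  also have "\<dots> \<longleftrightarrow> (\<forall>i\<le>m. t i \<notin> A)" by auto
  finally show ?thesis .
qed

lemma supp_dirac_avg:
  assumes H: "Hausdorff_space Y" and t: "\<And>i. i \<le> m \<Longrightarrow> t i \<in> topspace Y"
  shows "supp Y (dirac_avg Y m t) = t ` {..m}"
proof -
  have "y \<in> supp Y (dirac_avg Y m t) \<longleftrightarrow> y \<in> t ` {..m}" for y
  proof
    assume y: "y \<in> supp Y (dirac_avg Y m t)"
    show "y \<in> t ` {..m}"
    proof (rule ccontr)
      assume n: "y \<notin> t ` {..m}"
      let ?U = "topspace Y - t ` {..m}"
      have "openin Y ?U"
        using finite_closedin_Hausdorff[OF H, of "t ` {..m}"] t by auto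
      moreover have "emeasure (dirac_avg Y m t) ?U = 0"
        using emeasure_dirac_avg_zero_iff[OF t open_in_borel_of[OF \<open>openin Y ?U\<close>]] by auto
      ultimately show False using y n unfolding supp_def by auto
    qed
  next
    assume "y \<in> t ` {..m}"
    then obtain j where j: "j \<le> m" "y = t j" by auto
    show "y \<in> supp Y (dirac_avg Y m t)"
      unfolding supp_def
    proof (safe)
      show "y \<in> topspace Y" using j t by auto
      fix U assume "y \<in> U" "openin Y U" "emeasure (dirac_avg Y m t) U = 0"
      then show False
        using emeasure_dirac_avg_zero_iff[OF t open_in_borel_of[OF \<open>openin Y U\<close>]] j by auto
    qed
  qed
  then show ?thesis by blast
qed

lemma card_preimage_inj:
  assumes "inj_on t {..m}"
  shows "card {i\<in>{..m}. t i \<in> A} = card (t ` {..m} \<inter> A)"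
proof -
  have "t ` {i\<in>{..m}. t i \<in> A} = t ` {..m} \<inter> A" by auto
  moreover have "inj_on t {i\<in>{..m}. t i \<in> A}" using assms by (rule inj_on_subset) auto
  ultimately show ?thesis by (metis card_image)
qed

lemma dirac_avg_eq_iff:
  assumes H: "Hausdorff_space Y"
    and t: "\<And>i. i \<le> m \<Longrightarrow> t i \<in> topspace Y" and s: "\<And>i. i \<le> m \<Longrightarrow> s i \<in> topspace Y"
    and it: "inj_on t {..m}" and injs: "inj_on s {..m}"
  shows "dirac_avg Y m t = dirac_avg Y m s \<longleftrightarrow> t ` {..m} = s ` {..m}"
proof
  assume "dirac_avg Y m t = dirac_avg Y m s"
  then show "t ` {..m} = s ` {..m}"
    using supp_dirac_avg[of Y m t, OF H t] supp_dirac_avg[of Y m s, OF H s] by simp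
next
  assume eq: "t ` {..m} = s ` {..m}"
  show "dirac_avg Y m t = dirac_avg Y m s"
  proof (rule measure_eqI)
    fix A assume "A \<in> sets (dirac_avg Y m t)"
    then have A: "A \<in> sets (borel_of Y)" by simp
    show "emeasure (dirac_avg Y m t) A = emeasure (dirac_avg Y m s) A"
      using emeasure_dirac_avg[OF t A] emeasure_dirac_avg[OF s A]
        card_preimage_inj[OF it, of A] card_preimage_inj[OF injs, of A] eq by simp
  qed simp
qed

lemma dirac_avg_in_PY:
  assumes H: "Hausdorff_space Y" and t: "\<And>i. i \<le> m \<Longrightarrow> t i \<in> topspace Y"
    and fib: "\<And>i. i \<le> m \<Longrightarrow> \<rho> (t i) = x" and x: "x \<in> topspace X"
  shows "dirac_avg Y m t \<in> PY Y X \<rho>"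
proof -
  let ?\<mu> = "dirac_avg Y m t"
  have em: "emeasure ?\<mu> A = ennreal (real (card {i\<in>{..m}. t i \<in> A}) / real (Suc m))"
    if "A \<in> sets (borel_of Y)" for A using emeasure_dirac_avg[OF t that] .
  have top: "topspace Y \<in> sets (borel_of Y)" by (metis sets.top space_borel_of)
  have closed_sets: "closedin Y C \<Longrightarrow> C \<in> sets ?\<mu>" for C by (simp add: closed_in_borel_of)
  have radon: "radon Y ?\<mu>"
    unfolding radon_def
  proof (intro conjI allI impI ballI)
    show "space ?\<mu> = topspace Y" "sets ?\<mu> = sets (borel_of Y)" by simp_all
  next
    fix K assume "compactin Y K"
    have "emeasure ?\<mu> K \<le> emeasure ?\<mu> (space ?\<mu>)" by (rule emeasure_space)
    also have "\<dots> < \<infinity>" using em[OF top] by simp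
    finally show "emeasure ?\<mu> K < \<infinity>" .
  next
    fix B assume B: "B \<in> sets ?\<mu>"
    then have Bs: "B \<subseteq> topspace Y" using sets.sets_into_space by fastforce
    let ?U = "topspace Y - (t ` {..m} - B)"
    have U: "openin Y ?U"
      using finite_closedin_Hausdorff[OF H, of "t ` {..m} - B"] t by auto
    have "emeasure ?\<mu> ?U = emeasure ?\<mu> B"
    proof -
      have "{i\<in>{..m}. t i \<in> ?U} = {i\<in>{..m}. t i \<in> B}" using t by auto
      then show ?thesis using em[OF open_in_borel_of[OF U]] em B by simp
    qed
    moreover have "B \<subseteq> ?U" using Bs by auto
    ultimately have le: "(INF U\<in>{U. openin Y U \<and> B \<subseteq> U}. emeasure ?\<mu> U) \<le> emeasure ?\<mu> B"
      using U by (metis (mono_tags, lifting) INF_lower mem_Collect_eq)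
    have ge: "emeasure ?\<mu> B \<le> (INF U\<in>{U. openin Y U \<and> B \<subseteq> U}. emeasure ?\<mu> U)"
      by (rule INF_greatest) (auto intro!: emeasure_mono simp: open_in_borel_of)
    show "emeasure ?\<mu> B = (INF U\<in>{U. openin Y U \<and> B \<subseteq> U}. emeasure ?\<mu> U)"
      using le ge by (rule antisym[rotated])
  next
    fix U assume U: "openin Y U"
    let ?K = "t ` {..m} \<inter> U"
    have K: "compactin Y ?K" using t by (intro finite_imp_compactin) auto
    have "emeasure ?\<mu> ?K = emeasure ?\<mu> U"
    proof -
      have "{i\<in>{..m}. t i \<in> ?K} = {i\<in>{..m}. t i \<in> U}" by auto
      then show ?thesis using em[OF open_in_borel_of[OF U]] em[OF closed_in_borel_of[OF compactin_imp_closedin[OF H K]]] by simp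
    qed
    then have ge: "emeasure ?\<mu> U \<le> (SUP K\<in>{K. compactin Y K \<and> K \<subseteq> U}. emeasure ?\<mu> K)"
      using K by (metis (mono_tags, lifting) SUP_upper inf_le2 mem_Collect_eq)
    have le: "(SUP K\<in>{K. compactin Y K \<and> K \<subseteq> U}. emeasure ?\<mu> K) \<le> emeasure ?\<mu> U"
      by (rule SUP_least, rule emeasure_mono) (auto simp: open_in_borel_of U)
    show "emeasure ?\<mu> U = (SUP K\<in>{K. compactin Y K \<and> K \<subseteq> U}. emeasure ?\<mu> K)"
      using le ge by (rule antisym[rotated])
  qed
  have one: "emeasure ?\<mu> (topspace Y) = 1"
  proof -
    have "{i\<in>{..m}. t i \<in> topspace Y} = {..m}" using t by auto
    then show ?thesis using em[OF top] by simp
  qed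
  have "supp Y ?\<mu> \<subseteq> fibre Y \<rho> x"
    using supp_dirac_avg[of Y m t, OF H t] t fib by (auto simp: fibre_def)
  then show ?thesis using radon one x unfolding PY_def by blast
qed

lemma dirac_avg_cong:
  assumes "\<And>i. i \<le> m \<Longrightarrow> t i = s i" shows "dirac_avg Y m t = dirac_avg Y m s"
proof -
  have eq: "\<And>A. (\<Sum>i\<le>m. indicator A (t i)) = (\<Sum>i\<le>m. indicator A (s i) :: real)"
    using assms by (intro sum.cong) auto
  show ?thesis unfolding dirac_avg_def by (subst eq) (rule refl)
qed

lemma conf_top_iff:
  "t \<in> topspace (conf_top Y \<rho> m) \<longleftrightarrow> t \<in> PiE {..m} (\<lambda>_. topspace Y) \<and> inj_on t {..m} \<and> (\<forall>i\<le>m. \<forall>j\<le>m. \<rho> (t i) = \<rho> (t j))"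
  by (simp only: topspace_conf_top mem_Collect_eq)

lemma conf_topD:
  assumes "t \<in> topspace (conf_top Y \<rho> m)"
  shows "\<And>i. i \<le> m \<Longrightarrow> t i \<in> topspace Y" "inj_on t {..m}"
    "\<And>i j. i \<le> m \<Longrightarrow> j \<le> m \<Longrightarrow> \<rho> (t i) = \<rho> (t j)" "t \<in> extensional {..m}"
proof -
  note a = assms[unfolded conf_top_iff]
  show "\<And>i. i \<le> m \<Longrightarrow> t i \<in> topspace Y" using a by (auto simp: PiE_iff)
  show "inj_on t {..m}" using a by blast
  show "\<And>i j. i \<le> m \<Longrightarrow> j \<le> m \<Longrightarrow> \<rho> (t i) = \<rho> (t j)" using a by blast
  show "t \<in> extensional {..m}" using a by (simp add: PiE_iff)
qed

lemma conf_topI: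
  assumes "\<And>i. i \<le> m \<Longrightarrow> t i \<in> topspace Y" "t \<in> extensional {..m}" "inj_on t {..m}"
    "\<And>i. i \<le> m \<Longrightarrow> \<rho> (t i) = x"
  shows "t \<in> topspace (conf_top Y \<rho> m)"
  unfolding conf_top_iff
proof (intro conjI)
  show "t \<in> PiE {..m} (\<lambda>_. topspace Y)" using assms(1,2) by (auto simp: PiE_iff)
  show "inj_on t {..m}" by (rule assms(3))
  show "\<forall>i\<le>m. \<forall>j\<le>m. \<rho> (t i) = \<rho> (t j)" using assms(4) by metis
qed

lemma A_set_eq:
  assumes H: "Hausdorff_space Y" and LH: "local_homeo Y X \<rho>"
  shows "A_set Y X \<rho> m = dirac_avg Y m ` topspace (conf_top Y \<rho> m)"
proof
  show "A_set Y X \<rho> m \<subseteq> dirac_avg Y m ` topspace (conf_top Y \<rho> m)"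
  proof
    fix \<mu> assume "\<mu> \<in> A_set Y X \<rho> m"
    then obtain t x where mu: "\<mu> \<in> PY Y X \<rho>" and t: "inj_on t {..m}" "\<And>i. i \<le> m \<Longrightarrow> t i \<in> topspace Y"
      and eq: "\<mu> = dirac_avg Y m t" and x: "supp Y \<mu> \<subseteq> fibre Y \<rho> x"
      unfolding A_set_def PY_def by blast
    have "t ` {..m} \<subseteq> fibre Y \<rho> x" using x supp_dirac_avg[of Y m t, OF H t(2)] eq by simp
    then have fib: "\<And>i. i \<le> m \<Longrightarrow> \<rho> (t i) = x" by (auto simp: fibre_def)
    let ?t = "restrict t {..m}"
    have "?t \<in> topspace (conf_top Y \<rho> m)"
    proof (rule conf_topI)
      show "inj_on ?t {..m}" using t(1) by (simp add: inj_on_def)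
    qed (use t fib in auto)
    moreover have "dirac_avg Y m ?t = \<mu>" unfolding eq by (rule dirac_avg_cong) simp
    ultimately show "\<mu> \<in> dirac_avg Y m ` topspace (conf_top Y \<rho> m)" by blast
  qed
next
  show "dirac_avg Y m ` topspace (conf_top Y \<rho> m) \<subseteq> A_set Y X \<rho> m"
  proof clarify
    fix t assume t: "t \<in> topspace (conf_top Y \<rho> m)"
    note tt = conf_topD[OF t]
    have t1: "\<And>i. i \<le> m \<Longrightarrow> t i \<in> topspace Y" and inj: "inj_on t {..m}"
      and fib: "\<And>i. i \<le> m \<Longrightarrow> \<rho> (t i) = \<rho> (t 0)"
      using tt(1,2) by (auto intro: tt(3))
    have "\<rho> (t 0) \<in> topspace X" using LH t1[of 0] by (auto simp: local_homeo_def)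
    then have "dirac_avg Y m t \<in> PY Y X \<rho>"
      using dirac_avg_in_PY[of Y m t \<rho> "\<rho> (t 0)" X, OF H t1 fib] by blast
    then show "dirac_avg Y m t \<in> A_set Y X \<rho> m"
      unfolding A_set_def using t1 inj by blast
  qed
qed

lemma phi_D:
  assumes H: "Hausdorff_space Y" and t: "t \<in> topspace (conf_top Y \<rho> m)"
  shows "phi Y \<rho> m (dirac_avg Y m t) = t ` {..m}"
  unfolding phi_def
proof (rule the_equality)
  show "\<exists>s\<in>topspace (conf_top Y \<rho> m). dirac_avg Y m t = dirac_avg Y m s \<and> t ` {..m} = conf_class m s"
    using t by (auto simp: conf_class_def)
  fix b assume "\<exists>s\<in>topspace (conf_top Y \<rho> m). dirac_avg Y m t = dirac_avg Y m s \<and> b = conf_class m s"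
  then obtain s where s: "s \<in> topspace (conf_top Y \<rho> m)" "dirac_avg Y m t = dirac_avg Y m s" "b = s ` {..m}"
    by (auto simp: conf_class_def)
  have "t ` {..m} = s ` {..m}"
    using dirac_avg_eq_iff[OF H conf_topD(1)[OF t] conf_topD(1)[OF s(1)] conf_topD(2)[OF t] conf_topD(2)[OF s(1)]] s(2)
    by blast
  then show "b = t ` {..m}" using s(3) by simp
qed

lemma rho_tilde_D:
  assumes H: "Hausdorff_space Y" and HX: "Hausdorff_space X" and LH: "local_homeo Y X \<rho>"
    and t: "t \<in> topspace (conf_top Y \<rho> m)"
  shows "rho_tilde Y X \<rho> (dirac_avg Y m t) = \<rho> (t 0)"
proof -
  note tt = conf_topD[OF t]
  have x0: "\<rho> (t 0) \<in> topspace X" using LH tt(1)[of 0] by (auto simp: local_homeo_def)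
  have meas: "\<rho> \<in> measurable (dirac_avg Y m t) (borel_of X)"
    using continuous_measurable_borel_of[OF local_homeo_continuous[OF LH]]
    by (simp add: measurable_cong_sets[OF sets_dirac_avg refl])
  have eq: "distr (dirac_avg Y m t) (borel_of X) \<rho> = return (borel_of X) (\<rho> (t 0))"
  proof (rule measure_eqI)
    fix A assume "A \<in> sets (distr (dirac_avg Y m t) (borel_of X) \<rho>)"
    then have A: "A \<in> sets (borel_of X)" by simp
    have pre: "\<rho> -` A \<inter> topspace Y \<in> sets (borel_of Y)"
      using measurable_sets[OF meas A] by simp
    have fA: "t i \<in> \<rho> -` A \<inter> topspace Y \<longleftrightarrow> \<rho> (t 0) \<in> A" if i: "i \<le> m" for i
    proof -
      have "\<rho> (t i) = \<rho> (t 0)" using tt(3)[OF i] by simp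
      then show ?thesis using tt(1)[OF i] by auto
    qed
    have "emeasure (distr (dirac_avg Y m t) (borel_of X) \<rho>) A = emeasure (dirac_avg Y m t) (\<rho> -` A \<inter> topspace Y)"
      using meas A by (simp add: emeasure_distr)
    also have "\<dots> = ennreal (real (card {i\<in>{..m}. t i \<in> \<rho> -` A \<inter> topspace Y}) / real (Suc m))"
      using emeasure_dirac_avg[OF tt(1) pre] .
    also have "\<dots> = indicator A (\<rho> (t 0))"
    proof (cases "\<rho> (t 0) \<in> A")
      case True
      then have "{i\<in>{..m}. t i \<in> \<rho> -` A \<inter> topspace Y} = {..m}" using fA by auto
      then show ?thesis using True by simp
    next
      case False
      then have "{i\<in>{..m}. t i \<in> \<rho> -` A \<inter> topspace Y} = {}" using fA by auto
      then show ?thesis using False by simp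
    qed
    also have "\<dots> = emeasure (return (borel_of X) (\<rho> (t 0))) A" using A by simp
    finally show "emeasure (distr (dirac_avg Y m t) (borel_of X) \<rho>) A = emeasure (return (borel_of X) (\<rho> (t 0))) A" .
  qed simp
  show ?thesis
    unfolding rho_tilde_def
  proof (rule the_equality)
    show "distr (dirac_avg Y m t) (borel_of X) \<rho> = return (borel_of X) (\<rho> (t 0))" by (rule eq)
    fix x assume "distr (dirac_avg Y m t) (borel_of X) \<rho> = return (borel_of X) x"
    then have r: "return (borel_of X) x = return (borel_of X) (\<rho> (t 0))" using eq by simp
    have S: "{\<rho> (t 0)} \<in> sets (borel_of X)"
      by (rule closed_in_borel_of, rule closedin_Hausdorff_singleton[OF HX x0])
    have "indicator {\<rho> (t 0)} x = (indicator {\<rho> (t 0)} (\<rho> (t 0)) :: ennreal)"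
      using arg_cong[OF r, of "\<lambda>M. emeasure M {\<rho> (t 0)}"] S by simp
    then show "x = \<rho> (t 0)" by (simp add: indicator_def split: if_splits)
  qed
qed

lemma continuous_map_generated:
  assumes "\<And>s. s \<in> S \<Longrightarrow> openin X {x \<in> topspace X. f x \<in> s}" and "f ` topspace X \<subseteq> \<Union>S"
  shows "continuous_map X (topology_generated_by S) f"
  unfolding continuous_map_def
proof (intro conjI allI impI)
  show "f \<in> topspace X \<rightarrow> topspace (topology_generated_by S)" using assms(2) by auto
  fix U assume "openin (topology_generated_by S) U"
  then have "generate_topology_on S U" by (rule openin_topology_generated_by)
  then show "openin X {x \<in> topspace X. f x \<in> U}"
  proof induct
    case Empty then show ?case by simp
  next
    case (Int a b)
    have "{x \<in> topspace X. f x \<in> a \<inter> b} = {x \<in> topspace X. f x \<in> a} \<inter> {x \<in> topspace X. f x \<in> b}" by auto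
    then show ?case using Int by auto
  next
    case (UN K)
    have "{x \<in> topspace X. f x \<in> \<Union>K} = \<Union>((\<lambda>k. {x \<in> topspace X. f x \<in> k}) ` K)" by auto
    then show ?case using UN by auto
  next
    case (Basis s) then show ?case using assms(1) by blast
  qed
qed

lemma A_top_eq: "A_top Y X \<rho> m = subtopology
     (topology_generated_by {{\<mu>. integral\<^sup>L \<mu> f \<in> V} | f V. f \<in> Cc Y \<and> open V}) (A_set Y X \<rho> m)"
  unfolding A_top_def PY_top_def subtopology_subtopology
  by (metis (no_types, lifting) A_set_def Int_absorb1 mem_Collect_eq subsetI)

lemma topspace_A_top: "topspace (A_top Y X \<rho> m) = A_set Y X \<rho> m"
proof -
  have "(\<lambda>_. 0::real) \<in> Cc Y" by (simp add: Cc_def)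
  then have "UNIV \<in> {{\<mu>. integral\<^sup>L \<mu> f \<in> V} | f V. f \<in> Cc Y \<and> open V}"
    by force
  then show ?thesis unfolding A_top_eq by auto
qed

lemma D_continuous:
  assumes H: "Hausdorff_space Y" and LH: "local_homeo Y X \<rho>"
  shows "continuous_map (conf_top Y \<rho> m) (A_top Y X \<rho> m) (dirac_avg Y m)"
  unfolding A_top_eq
proof (subst continuous_map_in_subtopology, intro conjI)
  show "dirac_avg Y m \<in> topspace (conf_top Y \<rho> m) \<rightarrow> A_set Y X \<rho> m"
    using A_set_eq[OF H LH] by auto
  show "continuous_map (conf_top Y \<rho> m)
     (topology_generated_by {{\<mu>. integral\<^sup>L \<mu> f \<in> V} | f V. f \<in> Cc Y \<and> open V}) (dirac_avg Y m)"
  proof (rule continuous_map_generated)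
    have "(\<lambda>_. 0::real) \<in> Cc Y" by (simp add: Cc_def)
    then have "UNIV \<in> {{\<mu>. integral\<^sup>L \<mu> f \<in> V} | f V. f \<in> Cc Y \<and> open V}"
      by force
    then show "dirac_avg Y m ` topspace (conf_top Y \<rho> m) \<subseteq> \<Union>{{\<mu>. integral\<^sup>L \<mu> f \<in> V} | f V. f \<in> Cc Y \<and> open V}"
      by blast
    fix s assume "s \<in> {{\<mu>. integral\<^sup>L \<mu> f \<in> V} | f V. f \<in> Cc Y \<and> open V}"
    then obtain f V where s: "s = {\<mu>. integral\<^sup>L \<mu> f \<in> V}" and f: "continuous_map Y euclideanreal f" and V: "open V"
      by (auto simp: Cc_def)
    have proj: "continuous_map (conf_top Y \<rho> m) Y (\<lambda>t. t i)" if "i \<le> m" for i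
      unfolding conf_top_def
      by (rule continuous_map_from_subtopology, rule continuous_map_product_projection) (use that in simp)
    have "continuous_map (conf_top Y \<rho> m) euclideanreal (\<lambda>t. f (t i))" if "i \<le> m" for i
      using continuous_map_compose[OF proj[OF that] f] by (simp add: o_def)
    then have "continuous_map (conf_top Y \<rho> m) euclideanreal (\<lambda>t. (\<Sum>i\<le>m. f (t i)))"
      by (intro continuous_map_sum) auto
    then have cont: "continuous_map (conf_top Y \<rho> m) euclideanreal (\<lambda>t. (\<Sum>i\<le>m. f (t i)) / real (Suc m))"
      by (rule continuous_map_real_divide) auto
    have "{t \<in> topspace (conf_top Y \<rho> m). dirac_avg Y m t \<in> s} =
          {t \<in> topspace (conf_top Y \<rho> m). (\<Sum>i\<le>m. f (t i)) / real (Suc m) \<in> V}"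
    proof -
      have "integral\<^sup>L (dirac_avg Y m t) f = (\<Sum>i\<le>m. f (t i)) / real (Suc m)"
        if "t \<in> topspace (conf_top Y \<rho> m)" for t
        using integral_dirac_avg[of m t Y f, OF conf_topD(1)[OF that] f] .
      then show ?thesis using s by auto
    qed
    then show "openin (conf_top Y \<rho> m) {t \<in> topspace (conf_top Y \<rho> m). dirac_avg Y m t \<in> s}"
      using cont V by (simp add: continuous_map_def)
  qed
qed

lemma bump:
  assumes LC: "locally_compact_space Y" and H: "Hausdorff_space Y" and V: "openin Y V" and y: "y \<in> V"
  shows "\<exists>f. f \<in> Cc Y \<and> f y > 0 \<and> (\<forall>z. f z \<ge> 0) \<and> (\<forall>z\<in>topspace Y. f z \<noteq> 0 \<longrightarrow> z \<in> V)"
proof -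
  have "neighbourhood_base_of (compactin Y) Y"
    using locally_compact_space_neighbourhood_base H LC by blast
  then obtain U K where U: "openin Y U" "compactin Y K" "y \<in> U" "U \<subseteq> K" "K \<subseteq> V"
    using V y unfolding neighbourhood_base_of by metis
  have "completely_regular_space Y"
    using locally_compact_regular_imp_completely_regular_space LC H by blast
  then obtain g where g: "continuous_map Y euclideanreal g" "g y = 0" "g ` (topspace Y - U) \<subseteq> {1}"
    using U(1,3) unfolding completely_regular_space_alt' by metis
  define f where "f z = max 0 (1/2 - g z)" for z
  have fc: "continuous_map Y euclideanreal f"
    unfolding f_def by (intro continuous_map_real_max continuous_map_diff g(1) continuous_map_const) auto
  let ?C = "{z \<in> topspace Y. g z \<in> {..1/2}}"
  have Cc: "closedin Y ?C"
    by (rule closedin_continuous_map_preimage[OF g(1)]) auto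
  have CU: "?C \<subseteq> U" using g(3) by force
  have sub: "{z \<in> topspace Y. f z \<noteq> 0} \<subseteq> ?C" by (auto simp: f_def)
  have "Y closure_of {z \<in> topspace Y. f z \<noteq> 0} \<subseteq> ?C"
    by (rule closure_of_minimal[OF sub Cc])
  then have "compactin Y (Y closure_of {z \<in> topspace Y. f z \<noteq> 0})"
    using closed_compactin[OF U(2)] CU U(4) by (meson closedin_closure_of order_trans)
  then have "f \<in> Cc Y" using fc by (simp add: Cc_def)
  moreover have "f y > 0" using g(2) by (simp add: f_def)
  moreover have "\<forall>z. f z \<ge> 0" by (simp add: f_def)
  moreover have "\<forall>z\<in>topspace Y. f z \<noteq> 0 \<longrightarrow> z \<in> V" using sub CU U(4,5) by blast
  ultimately show ?thesis by blast
qed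

lemma separate_points:
  fixes t :: "nat \<Rightarrow> 'a" and m :: nat
  assumes H: "Hausdorff_space Y" and t: "\<And>i. i \<le> m \<Longrightarrow> t i \<in> topspace Y" and inj: "inj_on t {..m}"
  shows "\<exists>N. \<forall>i\<le>m. openin Y (N i) \<and> t i \<in> N i \<and> (\<forall>j\<le>m. j \<noteq> i \<longrightarrow> N i \<inter> N j = {})"
proof -
  have "\<forall>i j. \<exists>P. i \<le> m \<and> j \<le> m \<and> i \<noteq> j \<longrightarrow>
      openin Y (fst P) \<and> openin Y (snd P) \<and> t i \<in> fst P \<and> t j \<in> snd P \<and> fst P \<inter> snd P = {}"
  proof (intro allI)
    fix i j
    show "\<exists>P. i \<le> m \<and> j \<le> m \<and> i \<noteq> j \<longrightarrow>
      openin Y (fst P) \<and> openin Y (snd P) \<and> t i \<in> fst P \<and> t j \<in> snd P \<and> fst P \<inter> snd P = {}"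
    proof (cases "i \<le> m \<and> j \<le> m \<and> i \<noteq> j")
      case True
      then have "t i \<noteq> t j" using inj by (auto simp: inj_on_def)
      then obtain U V where "openin Y U" "openin Y V" "t i \<in> U" "t j \<in> V" "disjnt U V"
        using H True t unfolding Hausdorff_space_def by metis
      then show ?thesis by (intro exI[of _ "(U, V)"]) (auto simp: disjnt_def)
    qed auto
  qed
  then obtain P where P: "\<And>i j. i \<le> m \<Longrightarrow> j \<le> m \<Longrightarrow> i \<noteq> j \<Longrightarrow>
      openin Y (fst (P i j)) \<and> openin Y (snd (P i j)) \<and> t i \<in> fst (P i j) \<and> t j \<in> snd (P i j) \<and> fst (P i j) \<inter> snd (P i j) = {}"
    by metis
  define N where "N i = (\<Inter>j \<in> {..m} - {i}. fst (P i j) \<inter> snd (P j i)) \<inter> topspace Y" for i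
  have "openin Y (N i) \<and> t i \<in> N i \<and> (\<forall>j\<le>m. j \<noteq> i \<longrightarrow> N i \<inter> N j = {})" if i: "i \<le> m" for i
  proof (intro conjI allI impI)
    show "openin Y (N i)" unfolding N_def
      by (rule openin_INT) (use P i in auto)
    show "t i \<in> N i" unfolding N_def using P i t by auto
    fix j assume "j \<le> m" "j \<noteq> i"
    then have "N i \<subseteq> fst (P i j)" "N j \<subseteq> snd (P i j)" using i unfolding N_def by auto
    then show "N i \<inter> N j = {}" using P[OF i \<open>j \<le> m\<close>] \<open>j \<noteq> i\<close> by blast
  qed
  then show ?thesis by blast
qed

lemma pigeon:
  fixes s :: "nat \<Rightarrow> 'a" and V :: "nat \<Rightarrow> 'a set" and m :: nat
  assumes disj: "\<And>i j. i \<le> m \<Longrightarrow> j \<le> m \<Longrightarrow> i \<noteq> j \<Longrightarrow> V i \<inter> V j = {}"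
    and ex: "\<And>i. i \<le> m \<Longrightarrow> \<exists>j\<le>m. s j \<in> V i"
  shows "\<exists>\<sigma>. bij_betw \<sigma> {..m} {..m} \<and> (\<forall>i\<le>m. s (\<sigma> i) \<in> V i)"
proof -
  define \<sigma> where "\<sigma> i = (SOME j. j \<le> m \<and> s j \<in> V i)" for i
  have \<sigma>: "\<sigma> i \<le> m \<and> s (\<sigma> i) \<in> V i" if "i \<le> m" for i
    unfolding \<sigma>_def by (rule someI_ex) (use ex[OF that] in auto)
  have inj: "inj_on \<sigma> {..m}"
  proof (rule inj_onI)
    fix i i' assume "i \<in> {..m}" "i' \<in> {..m}" "\<sigma> i = \<sigma> i'"
    then have "s (\<sigma> i) \<in> V i \<inter> V i'" using \<sigma> by (metis IntI atMost_iff)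
    then show "i = i'" using disj \<open>i \<in> {..m}\<close> \<open>i' \<in> {..m}\<close> by blast
  qed
  have "\<sigma> ` {..m} \<subseteq> {..m}" using \<sigma> by auto
  then have "\<sigma> ` {..m} = {..m}" using endo_inj_surj[OF finite_atMost _ inj] by blast
  then have "bij_betw \<sigma> {..m} {..m}" using inj by (simp add: bij_betw_def)
  then show ?thesis using \<sigma> by blast
qed

lemma key_nbhd:
  assumes LC: "locally_compact_space Y" and H: "Hausdorff_space Y" and LH: "local_homeo Y X \<rho>"
    and t0: "t0 \<in> topspace (conf_top Y \<rho> m)"
    and V: "\<And>i. i \<le> m \<Longrightarrow> openin Y (V i) \<and> t0 i \<in> V i"
  shows "\<exists>W. openin (A_top Y X \<rho> m) W \<and> dirac_avg Y m t0 \<in> W \<and>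
           (\<forall>s\<in>topspace (conf_top Y \<rho> m). dirac_avg Y m s \<in> W \<longrightarrow> (\<forall>i\<le>m. \<exists>j\<le>m. s j \<in> V i))"
proof -
  have "\<forall>i. \<exists>f. i \<le> m \<longrightarrow> f \<in> Cc Y \<and> f (t0 i) > 0 \<and> (\<forall>z. f z \<ge> 0) \<and> (\<forall>z\<in>topspace Y. f z \<noteq> 0 \<longrightarrow> z \<in> V i)"
    using bump[OF LC H] V by metis
  then obtain f where f: "\<And>i. i \<le> m \<Longrightarrow> f i \<in> Cc Y \<and> f i (t0 i) > 0 \<and> (\<forall>z. f i z \<ge> 0) \<and> (\<forall>z\<in>topspace Y. f i z \<noteq> 0 \<longrightarrow> z \<in> V i)"
    by metis
  let ?S = "{{\<mu>. integral\<^sup>L \<mu> f \<in> V} | f V. f \<in> Cc Y \<and> open V}"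
  define G where "G = (\<Inter>i\<in>{..m}. {\<mu>. integral\<^sup>L \<mu> (f i) \<in> {0<..}})"
  have "generate_topology_on ?S G"
    unfolding G_def
  proof (rule generate_topology_on_Inter)
    show "finite ((\<lambda>i. {\<mu>. integral\<^sup>L \<mu> (f i) \<in> {0<..}}) ` {..m})" by simp
    show "(\<lambda>i. {\<mu>. integral\<^sup>L \<mu> (f i) \<in> {0<..}}) ` {..m} \<noteq> {}" by simp
    fix K assume "K \<in> (\<lambda>i. {\<mu>. integral\<^sup>L \<mu> (f i) \<in> {0<..}}) ` {..m}"
    then obtain i where "i \<le> m" "K = {\<mu>. integral\<^sup>L \<mu> (f i) \<in> {0<..}}" by auto
    then have "K \<in> ?S" using f[of i] by (auto intro!: exI[of _ "f i"] exI[of _ "{0<..}"])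
    then show "generate_topology_on ?S K" by (rule generate_topology_on.Basis)
  qed
  then have "openin (topology_generated_by ?S) G" by (simp add: openin_topology_generated_by_iff)
  then have Wo: "openin (A_top Y X \<rho> m) (A_set Y X \<rho> m \<inter> G)"
    unfolding A_top_eq by (rule openin_subtopology_Int2)
  have tt: "\<And>i. i \<le> m \<Longrightarrow> t0 i \<in> topspace Y" using conf_topD(1)[OF t0] .
  have intf: "integral\<^sup>L (dirac_avg Y m s) (f i) = (\<Sum>j\<le>m. f i (s j)) / real (Suc m)"
    if "s \<in> topspace (conf_top Y \<rho> m)" "i \<le> m" for s i
    using integral_dirac_avg[of m s Y "f i", OF conf_topD(1)[OF that(1)]] f[OF that(2)] by (simp add: Cc_def)
  have "dirac_avg Y m t0 \<in> G"
    unfolding G_def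
  proof (intro INT_I CollectI)
    fix i assume i: "i \<in> {..m}"
    have "0 < (\<Sum>j\<le>m. f i (t0 j))"
      by (rule sum_pos2[of _ i]) (use f i in auto)
    then show "integral\<^sup>L (dirac_avg Y m t0) (f i) \<in> {0<..}"
      using intf[OF t0] i by simp
  qed
  moreover have "dirac_avg Y m t0 \<in> A_set Y X \<rho> m" using A_set_eq[OF H LH] t0 by blast
  moreover have "\<forall>i\<le>m. \<exists>j\<le>m. s j \<in> V i"
    if s: "s \<in> topspace (conf_top Y \<rho> m)" and sW: "dirac_avg Y m s \<in> A_set Y X \<rho> m \<inter> G" for s
  proof (intro allI impI)
    fix i assume i: "i \<le> m"
    have "0 < integral\<^sup>L (dirac_avg Y m s) (f i)" using sW i unfolding G_def by auto
    then have "0 < (\<Sum>j\<le>m. f i (s j)) / real (Suc m)" using intf[OF s i] by simp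
    then have "(\<Sum>j\<le>m. f i (s j)) \<noteq> 0" by auto
    then obtain j where j: "j \<le> m" "f i (s j) \<noteq> 0" by (meson atMost_iff sum.neutral)
    then show "\<exists>j\<le>m. s j \<in> V i" using f[OF i] conf_topD(1)[OF s j(1)] by blast
  qed
  ultimately show ?thesis using Wo by blast
qed

lemma openin_B_top:
  "openin (B_top Y \<rho> m) U \<longleftrightarrow> U \<subseteq> conf_class m ` topspace (conf_top Y \<rho> m) \<and>
     openin (conf_top Y \<rho> m) {t \<in> topspace (conf_top Y \<rho> m). conf_class m t \<in> U}"
proof -
  let ?P = "\<lambda>U. U \<subseteq> conf_class m ` topspace (conf_top Y \<rho> m) \<and>
     openin (conf_top Y \<rho> m) {t \<in> topspace (conf_top Y \<rho> m). conf_class m t \<in> U}"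
  have "istopology ?P"
    unfolding istopology_def
  proof (rule conjI; intro allI impI)
    fix S T assume "?P S" "?P T"
    moreover have "{t \<in> topspace (conf_top Y \<rho> m). conf_class m t \<in> S \<inter> T} =
      {t \<in> topspace (conf_top Y \<rho> m). conf_class m t \<in> S} \<inter> {t \<in> topspace (conf_top Y \<rho> m). conf_class m t \<in> T}"
      by auto
    ultimately show "?P (S \<inter> T)" by auto
  next
    fix K assume K: "\<forall>k\<in>K. ?P k"
    have "{t \<in> topspace (conf_top Y \<rho> m). conf_class m t \<in> \<Union>K} =
      \<Union>((\<lambda>k. {t \<in> topspace (conf_top Y \<rho> m). conf_class m t \<in> k}) ` K)"
      by auto
    then show "?P (\<Union>K)" using K by (auto intro!: openin_Union)
  qed
  then show ?thesis unfolding B_top_def by simp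
qed

lemma topspace_B_top: "topspace (B_top Y \<rho> m) = conf_class m ` topspace (conf_top Y \<rho> m)"
proof -
  have "{t \<in> topspace (conf_top Y \<rho> m). conf_class m t \<in> conf_class m ` topspace (conf_top Y \<rho> m)}
        = topspace (conf_top Y \<rho> m)" by auto
  then have a: "openin (B_top Y \<rho> m) (conf_class m ` topspace (conf_top Y \<rho> m))"
    unfolding openin_B_top by simp
  have b: "topspace (B_top Y \<rho> m) \<subseteq> conf_class m ` topspace (conf_top Y \<rho> m)"
    using openin_topspace[of "B_top Y \<rho> m"] unfolding openin_B_top by blast
  show ?thesis using openin_subset[OF a] b by blast
qed

context
  fixes Y :: "'y topology" and X :: "'x topology" and \<rho> :: "'y \<Rightarrow> 'x" and m :: nat
  assumes LC: "locally_compact_space Y" and H: "Hausdorff_space Y" and LH: "local_homeo Y X \<rho>"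
begin

abbreviation "T \<equiv> topspace (conf_top Y \<rho> m)"
abbreviation "D \<equiv> dirac_avg Y m"

lemma D_eq_iff:
  assumes t: "t \<in> T" and s: "s \<in> T"
  shows "D t = D s \<longleftrightarrow> conf_class m t = conf_class m s"
  unfolding conf_class_def
  using dirac_avg_eq_iff[OF H conf_topD(1)[OF t] conf_topD(1)[OF s] conf_topD(2)[OF t] conf_topD(2)[OF s]] by blast

lemma phiD: "t \<in> T \<Longrightarrow> phi Y \<rho> m (D t) = conf_class m t"
  using phi_D[OF H, of t \<rho> m] by (simp add: conf_class_def)

lemma A_setE:
  assumes "\<mu> \<in> A_set Y X \<rho> m"
  obtains t where "t \<in> T" "\<mu> = D t"
  using assms A_set_eq[OF H LH] by blast

lemma D_in_A: "t \<in> T \<Longrightarrow> D t \<in> A_set Y X \<rho> m"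
  using A_set_eq[OF H LH] by blast

lemma phi_in_B: "\<mu> \<in> A_set Y X \<rho> m \<Longrightarrow> phi Y \<rho> m \<mu> \<in> conf_class m ` T"
  by (metis A_setE phiD image_eqI)

lemma preimage_phi_image:
  assumes U: "U \<subseteq> A_set Y X \<rho> m"
  shows "{t \<in> T. conf_class m t \<in> phi Y \<rho> m ` U} = {t \<in> T. D t \<in> U}"
proof -
  have "conf_class m t \<in> phi Y \<rho> m ` U \<longleftrightarrow> D t \<in> U" if t: "t \<in> T" for t
  proof
    assume "conf_class m t \<in> phi Y \<rho> m ` U"
    then obtain \<mu> where mu: "\<mu> \<in> U" and eq: "conf_class m t = phi Y \<rho> m \<mu>" by blast
    obtain s where s: "s \<in> T" "\<mu> = D s" using U mu A_setE by blast
    have "conf_class m t = conf_class m s" using eq s phiD by simp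
    then have "D t = D s" using D_eq_iff[OF t s(1)] by blast
    then show "D t \<in> U" using s mu by simp
  next
    assume "D t \<in> U"
    then show "conf_class m t \<in> phi Y \<rho> m ` U"
      using phiD[OF t] by (metis image_eqI)
  qed
  then show ?thesis by blast
qed

lemma phi_open_image:
  assumes "U \<subseteq> A_set Y X \<rho> m" "openin (conf_top Y \<rho> m) {t \<in> T. D t \<in> U}"
  shows "openin (B_top Y \<rho> m) (phi Y \<rho> m ` U)"
  unfolding openin_B_top preimage_phi_image[OF assms(1)]
proof (intro conjI assms(2))
  show "phi Y \<rho> m ` U \<subseteq> conf_class m ` T"
    using assms(1) phi_in_B by blast
qed

lemma phi_continuous: "continuous_map (A_top Y X \<rho> m) (B_top Y \<rho> m) (phi Y \<rho> m)"
  unfolding continuous_map_def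
proof (intro conjI allI impI)
  show "phi Y \<rho> m \<in> topspace (A_top Y X \<rho> m) \<rightarrow> topspace (B_top Y \<rho> m)"
    unfolding topspace_A_top topspace_B_top using phi_in_B by blast
  fix U assume U: "openin (B_top Y \<rho> m) U"
  show "openin (A_top Y X \<rho> m) {\<mu> \<in> topspace (A_top Y X \<rho> m). phi Y \<rho> m \<mu> \<in> U}"
  proof (subst openin_subopen, intro ballI)
    fix \<mu>0 assume "\<mu>0 \<in> {\<mu> \<in> topspace (A_top Y X \<rho> m). phi Y \<rho> m \<mu> \<in> U}"
    then obtain t0 where t0: "t0 \<in> T" "\<mu>0 = D t0" and inU: "phi Y \<rho> m \<mu>0 \<in> U"
      unfolding topspace_A_top by (auto elim: A_setE)
    have cU: "conf_class m t0 \<in> U" using inU phiD[OF t0(1)] t0(2) by simp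
    have "openin (conf_top Y \<rho> m) {t \<in> T. conf_class m t \<in> U}" using U by (simp add: openin_B_top)
    then obtain G where G: "openin (product_topology (\<lambda>i. Y) {..m}) G"
      and GU: "{t \<in> T. conf_class m t \<in> U} = G \<inter> {t. inj_on t {..m} \<and> (\<forall>i\<le>m. \<forall>j\<le>m. \<rho> (t i) = \<rho> (t j))}"
      unfolding conf_top_def openin_subtopology by blast
    have GU': "conf_class m t \<in> U" if t: "t \<in> T" "t \<in> G" for t
    proof -
      have "t \<in> G \<inter> {t. inj_on t {..m} \<and> (\<forall>i\<le>m. \<forall>j\<le>m. \<rho> (t i) = \<rho> (t j))}"
        using t(2) t(1)[unfolded conf_top_iff] by blast
      then have "t \<in> {t \<in> T. conf_class m t \<in> U}" by (subst GU)
      then show ?thesis by blast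
    qed
    have "t0 \<in> {t \<in> T. conf_class m t \<in> U}" using t0(1) cU by blast
    then have "t0 \<in> G" unfolding GU by blast
    then obtain Uf where Uf: "\<forall>i\<in>{..m}. openin Y (Uf i)" "t0 \<in> PiE {..m} Uf" "PiE {..m} Uf \<subseteq> G"
      using G unfolding openin_product_topology_alt by blast
    have t0top: "\<And>i. i \<le> m \<Longrightarrow> t0 i \<in> topspace Y" using conf_topD(1)[OF t0(1)] by blast
    have "\<exists>N. \<forall>i\<le>m. openin Y (N i) \<and> t0 i \<in> N i \<and> (\<forall>j\<le>m. j \<noteq> i \<longrightarrow> N i \<inter> N j = {})"
      by (rule separate_points[OF H]) (use t0top conf_topD(2)[OF t0(1)] in auto)
    then obtain N where N0: "\<forall>i\<le>m. openin Y (N i) \<and> t0 i \<in> N i \<and> (\<forall>j\<le>m. j \<noteq> i \<longrightarrow> N i \<inter> N j = {})"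
      by (elim exE)
    have N: "openin Y (N i) \<and> t0 i \<in> N i \<and> (\<forall>j\<le>m. j \<noteq> i \<longrightarrow> N i \<inter> N j = {})" if "i \<le> m" for i
      using N0 that by simp
    define V where "V i = Uf i \<inter> N i" for i
    have V: "\<And>i. i \<le> m \<Longrightarrow> openin Y (V i) \<and> t0 i \<in> V i"
    proof -
      fix i assume i: "i \<le> m"
      have "openin Y (Uf i)" "t0 i \<in> Uf i" using Uf i by (auto simp: PiE_iff)
      then show "openin Y (V i) \<and> t0 i \<in> V i" using N[OF i] unfolding V_def by auto
    qed
    obtain W where W: "openin (A_top Y X \<rho> m) W" "D t0 \<in> W"
      and Wp: "\<And>s. s \<in> T \<Longrightarrow> D s \<in> W \<Longrightarrow> \<forall>i\<le>m. \<exists>j\<le>m. s j \<in> V i"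
      using key_nbhd[OF LC H LH t0(1) V] by blast
    have "W \<subseteq> {\<mu> \<in> topspace (A_top Y X \<rho> m). phi Y \<rho> m \<mu> \<in> U}"
    proof
      fix \<mu> assume mu: "\<mu> \<in> W"
      then have muA: "\<mu> \<in> A_set Y X \<rho> m" using openin_subset[OF W(1)] topspace_A_top by blast
      then obtain s where s: "s \<in> T" "\<mu> = D s" by (rule A_setE)
      have ex: "\<forall>i\<le>m. \<exists>j\<le>m. s j \<in> V i" using Wp s mu by blast
      have disj: "V i \<inter> V j = {}" if "i \<le> m" "j \<le> m" "i \<noteq> j" for i j
        using N[OF that(1)] that unfolding V_def by blast
      have "\<exists>\<sigma>. bij_betw \<sigma> {..m} {..m} \<and> (\<forall>i\<le>m. s (\<sigma> i) \<in> V i)"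
        by (rule pigeon) (use disj ex in auto)
      then obtain \<sigma> where \<sigma>: "bij_betw \<sigma> {..m} {..m}" "\<forall>i\<le>m. s (\<sigma> i) \<in> V i"
        by blast
      let ?s = "restrict (s \<circ> \<sigma>) {..m}"
      note ss = conf_topD[OF s(1)]
      have s_img: "?s ` {..m} = s ` {..m}"
      proof -
        have "?s ` {..m} = (s \<circ> \<sigma>) ` {..m}" by auto
        also have "\<dots> = s ` (\<sigma> ` {..m})" by (rule image_comp[symmetric])
        also have "\<sigma> ` {..m} = {..m}" using \<sigma>(1) by (simp add: bij_betw_def)
        finally show ?thesis .
      qed
      have sT: "?s \<in> T"
      proof (rule conf_topI[where x = "\<rho> (s 0)"])
        show "\<And>i. i \<le> m \<Longrightarrow> ?s i \<in> topspace Y"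
          using \<sigma>(1) ss(1) by (auto simp: bij_betw_def)
        show "?s \<in> extensional {..m}" by simp
        show "inj_on ?s {..m}"
        proof -
          have "inj_on (s \<circ> \<sigma>) {..m}"
            using \<sigma>(1) ss(2) by (auto simp: bij_betw_def intro: comp_inj_on)
          then show ?thesis by (simp add: inj_on_def)
        qed
        fix i assume i: "i \<le> m"
        then have "\<sigma> i \<le> m" using \<sigma>(1) by (auto simp: bij_betw_def)
        then show "\<rho> (?s i) = \<rho> (s 0)" using i ss(3)[of "\<sigma> i" 0] by simp
      qed
      have "?s \<in> PiE {..m} Uf" using \<sigma>(2) unfolding V_def by (auto simp: PiE_iff)
      then have "?s \<in> G" using Uf(3) by blast
      then have "conf_class m ?s \<in> U" using GU'[OF sT] by blast
      then have "conf_class m s \<in> U" using s_img by (simp add: conf_class_def)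
      then show "\<mu> \<in> {\<mu> \<in> topspace (A_top Y X \<rho> m). phi Y \<rho> m \<mu> \<in> U}"
        using phiD[OF s(1)] s muA unfolding topspace_A_top by simp
    qed
    then show "\<exists>T. openin (A_top Y X \<rho> m) T \<and> \<mu>0 \<in> T \<and> T \<subseteq> {\<mu> \<in> topspace (A_top Y X \<rho> m). phi Y \<rho> m \<mu> \<in> U}"
      using W t0 by blast
  qed
qed

lemma phi_homeo: "homeomorphic_map (A_top Y X \<rho> m) (B_top Y \<rho> m) (phi Y \<rho> m)"
proof (rule bijective_open_imp_homeomorphic_map[OF phi_continuous])
  show "open_map (A_top Y X \<rho> m) (B_top Y \<rho> m) (phi Y \<rho> m)"
    unfolding open_map_def
  proof (intro allI impI)
    fix U assume U: "openin (A_top Y X \<rho> m) U"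
    then have UA: "U \<subseteq> A_set Y X \<rho> m" using openin_subset topspace_A_top by metis
    have "openin (conf_top Y \<rho> m) {t \<in> T. D t \<in> U}"
      using D_continuous[OF H LH] U by (simp add: continuous_map_def)
    then show "openin (B_top Y \<rho> m) (phi Y \<rho> m ` U)" by (rule phi_open_image[OF UA])
  qed
  show "phi Y \<rho> m ` topspace (A_top Y X \<rho> m) = topspace (B_top Y \<rho> m)"
    unfolding topspace_A_top topspace_B_top
  proof
    show "phi Y \<rho> m ` A_set Y X \<rho> m \<subseteq> conf_class m ` T" using phi_in_B by blast
    show "conf_class m ` T \<subseteq> phi Y \<rho> m ` A_set Y X \<rho> m"
    proof
      fix b assume "b \<in> conf_class m ` T"
      then obtain t where "t \<in> T" "b = conf_class m t" by blast
      then show "b \<in> phi Y \<rho> m ` A_set Y X \<rho> m" using phiD D_in_A by (metis image_eqI)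
    qed
  qed
  show "inj_on (phi Y \<rho> m) (topspace (A_top Y X \<rho> m))"
    unfolding topspace_A_top A_set_eq[OF H LH]
  proof (rule inj_onI)
    fix \<mu> \<nu> assume mn: "\<mu> \<in> D ` T" "\<nu> \<in> D ` T" "phi Y \<rho> m \<mu> = phi Y \<rho> m \<nu>"
    then obtain t s where ts: "t \<in> T" "s \<in> T" "\<mu> = D t" "\<nu> = D s" by blast
    then show "\<mu> = \<nu>" using mn(3) phiD[OF ts(1)] phiD[OF ts(2)] D_eq_iff[OF ts(1,2)] by simp
  qed
qed

lemma openin_A_top_iff:
  "openin (A_top Y X \<rho> m) U \<longleftrightarrow> U \<subseteq> A_set Y X \<rho> m \<and> openin (conf_top Y \<rho> m) {t \<in> T. D t \<in> U}"
proof
  assume U: "openin (A_top Y X \<rho> m) U"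
  have "U \<subseteq> A_set Y X \<rho> m" using openin_subset[OF U] unfolding topspace_A_top .
  moreover have "openin (conf_top Y \<rho> m) {t \<in> T. D t \<in> U}"
    by (rule openin_continuous_map_preimage[OF D_continuous[OF H LH] U])
  ultimately show "U \<subseteq> A_set Y X \<rho> m \<and> openin (conf_top Y \<rho> m) {t \<in> T. D t \<in> U}" ..
next
  assume U: "U \<subseteq> A_set Y X \<rho> m \<and> openin (conf_top Y \<rho> m) {t \<in> T. D t \<in> U}"
  then have "openin (B_top Y \<rho> m) (phi Y \<rho> m ` U)" using phi_open_image by blast
  then have o: "openin (A_top Y X \<rho> m) {\<mu> \<in> topspace (A_top Y X \<rho> m). phi Y \<rho> m \<mu> \<in> phi Y \<rho> m ` U}"
    by (rule openin_continuous_map_preimage[OF phi_continuous])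
  have inj: "inj_on (phi Y \<rho> m) (A_set Y X \<rho> m)"
    using homeomorphic_imp_injective_map[OF phi_homeo] unfolding topspace_A_top .
  have "{\<mu> \<in> topspace (A_top Y X \<rho> m). phi Y \<rho> m \<mu> \<in> phi Y \<rho> m ` U} = U"
  proof
    show "{\<mu> \<in> topspace (A_top Y X \<rho> m). phi Y \<rho> m \<mu> \<in> phi Y \<rho> m ` U} \<subseteq> U"
    proof
      fix \<mu> assume "\<mu> \<in> {\<mu> \<in> topspace (A_top Y X \<rho> m). phi Y \<rho> m \<mu> \<in> phi Y \<rho> m ` U}"
      then obtain \<nu> where "\<mu> \<in> A_set Y X \<rho> m" "\<nu> \<in> U" "phi Y \<rho> m \<mu> = phi Y \<rho> m \<nu>"
        unfolding topspace_A_top by blast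
      moreover have "\<nu> \<in> A_set Y X \<rho> m" using U \<open>\<nu> \<in> U\<close> by blast
      ultimately show "\<mu> \<in> U" using inj_onD[OF inj] by metis
    qed
    show "U \<subseteq> {\<mu> \<in> topspace (A_top Y X \<rho> m). phi Y \<rho> m \<mu> \<in> phi Y \<rho> m ` U}"
      using U unfolding topspace_A_top by blast
  qed
  then show "openin (A_top Y X \<rho> m) U" using o by simp
qed

end

lemma proj_cont: "i \<le> m \<Longrightarrow> continuous_map (conf_top Y \<rho> m) Y (\<lambda>t. t i)"
  unfolding conf_top_def
  by (rule continuous_map_from_subtopology, rule continuous_map_product_projection) simp

lemma set_map_upt: "set (map s [0..<Suc m]) = s ` {..m}"
  by (simp only: set_map set_upt atLeast0LessThan lessThan_Suc_atMost)

lemma closed_Delta: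
  assumes H2: "H2 Y \<Delta>"
  shows "closedin (conf_top Y \<rho> m) {t \<in> topspace (conf_top Y \<rho> m). t ` {..m} \<in> \<Delta>}"
proof -
  let ?C = "conf_top Y \<rho> m"
  let ?S = "{t \<in> topspace ?C. t ` {..m} \<in> \<Delta>}"
  have "?C closure_of ?S \<subseteq> ?S"
  proof
    fix t assume tc: "t \<in> ?C closure_of ?S"
    then have t: "t \<in> topspace ?C" and cl: "\<And>U. t \<in> U \<Longrightarrow> openin ?C U \<Longrightarrow> \<exists>y. y \<in> ?S \<and> y \<in> U"
      unfolding in_closure_of by blast+
    define L where "L s = map s [0..<Suc m]" for s :: "nat \<Rightarrow> 'a"
    define F where "F = filtermap L (inf (nhdsin ?C t) (principal ?S))"
    have "inf (nhdsin ?C t) (principal ?S) \<noteq> bot"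
    proof
      assume "inf (nhdsin ?C t) (principal ?S) = bot"
      then have "eventually (\<lambda>x. False) (inf (nhdsin ?C t) (principal ?S))" by simp
      then have "eventually (\<lambda>x. x \<in> ?S \<longrightarrow> False) (nhdsin ?C t)"
        unfolding eventually_inf_principal .
      then obtain U where "openin ?C U" "t \<in> U" "\<forall>x\<in>U. x \<notin> ?S"
        using t unfolding eventually_nhdsin by blast
      then show False using cl by blast
    qed
    then have Fnb: "F \<noteq> bot" unfolding F_def by (simp add: filtermap_bot_iff)
    have ev: "eventually (\<lambda>l. length l = length (L t) \<and> set l \<in> \<Delta>) F"
      unfolding F_def eventually_filtermap eventually_inf_principal
      by (rule always_eventually) (auto simp: L_def atLeast0LessThan lessThan_Suc_atMost simp del: upt_Suc)
    have lim: "limitin Y (\<lambda>l. l ! i) (L t ! i) F" if i: "i < length (L t)" for i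
    proof -
      have im: "i \<le> m" using i by (simp add: L_def)
      have Lti: "L t ! i = t i" using i by (simp add: L_def del: upt_Suc)
      show ?thesis
        unfolding limitin_def
      proof (intro conjI allI impI)
        show "L t ! i \<in> topspace Y" using Lti conf_topD(1)[OF t im] by simp
        fix U assume U: "openin Y U \<and> L t ! i \<in> U"
        have o: "openin ?C {s \<in> topspace ?C. s i \<in> U}"
          by (rule openin_continuous_map_preimage[OF proj_cont[OF im]]) (use U in simp)
        have "eventually (\<lambda>s. s i \<in> U) (nhdsin ?C t)"
          unfolding eventually_nhdsin
        proof (rule disjI2, intro exI conjI ballI)
          show "openin ?C {s \<in> topspace ?C. s i \<in> U}" by (rule o)
          show "t \<in> {s \<in> topspace ?C. s i \<in> U}" using t U Lti by simp
        qed simp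
        then have "eventually (\<lambda>s. L s ! i \<in> U) (nhdsin ?C t)"
          by (rule eventually_mono) (use i in \<open>simp add: L_def del: upt_Suc\<close>)
        then have "eventually (\<lambda>s. s \<in> ?S \<longrightarrow> L s ! i \<in> U) (nhdsin ?C t)"
          by (rule eventually_mono) simp
        then show "eventually (\<lambda>l. l ! i \<in> U) F"
          unfolding F_def eventually_filtermap eventually_inf_principal .
      qed
    qed
    have "set (L t) \<in> \<Delta>"
      using H2 Fnb ev lim unfolding H2_def by blast
    then show "t \<in> ?S" using t by (simp add: L_def atLeast0LessThan lessThan_Suc_atMost del: upt_Suc)
  qed
  moreover have "?S \<subseteq> topspace ?C" by blast
  ultimately show ?thesis using closure_of_subset_eq by blast
qed

lemma part3:
  assumes LC: "locally_compact_space Y" and H: "Hausdorff_space Y" and LH: "local_homeo Y X \<rho>"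
    and H2: "H2 Y \<Delta>"
  shows "closedin (A_top Y X \<rho> m) (A_set Y X \<rho> m \<inter> geom_real Y X \<rho> \<Delta>)"
proof -
  let ?C = "A_set Y X \<rho> m \<inter> geom_real Y X \<rho> \<Delta>"
  let ?S = "{t \<in> topspace (conf_top Y \<rho> m). t ` {..m} \<in> \<Delta>}"
  have eq: "{t \<in> topspace (conf_top Y \<rho> m). dirac_avg Y m t \<in> A_set Y X \<rho> m - ?C} =
            topspace (conf_top Y \<rho> m) - ?S"
  proof -
    have "dirac_avg Y m t \<in> A_set Y X \<rho> m - ?C \<longleftrightarrow> t ` {..m} \<notin> \<Delta>"
      if t: "t \<in> topspace (conf_top Y \<rho> m)" for t
    proof -
      have A: "dirac_avg Y m t \<in> A_set Y X \<rho> m" using D_in_A[OF LC H LH t] .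
      then have P: "dirac_avg Y m t \<in> PY Y X \<rho>" unfolding A_set_def by blast
      have "supp Y (dirac_avg Y m t) = t ` {..m}"
        using supp_dirac_avg[of Y m t, OF H conf_topD(1)[OF t]] .
      then show ?thesis using A P unfolding geom_real_def by auto
    qed
    then show ?thesis by blast
  qed
  have "openin (conf_top Y \<rho> m) (topspace (conf_top Y \<rho> m) - ?S)"
    using closed_Delta[OF H2, of \<rho> m] unfolding closedin_def by blast
  then have "openin (A_top Y X \<rho> m) (A_set Y X \<rho> m - ?C)"
    unfolding openin_A_top_iff[OF LC H LH] eq by blast
  then show ?thesis unfolding closedin_def topspace_A_top by blast
qed

lemma rho_tilde_continuous:
  assumes LC: "locally_compact_space Y" and H: "Hausdorff_space Y" and HX: "Hausdorff_space X"
    and LH: "local_homeo Y X \<rho>"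
  shows "continuous_map (A_top Y X \<rho> m) X (rho_tilde Y X \<rho>)"
  unfolding continuous_map_def
proof (intro conjI allI impI)
  have x0: "\<rho> (t 0) \<in> topspace X" if t: "t \<in> topspace (conf_top Y \<rho> m)" for t
    using LH conf_topD(1)[OF t, of 0] by (auto simp: local_homeo_def)
  show "rho_tilde Y X \<rho> \<in> topspace (A_top Y X \<rho> m) \<rightarrow> topspace X"
  proof
    fix \<mu> assume "\<mu> \<in> topspace (A_top Y X \<rho> m)"
    then obtain t where t: "t \<in> topspace (conf_top Y \<rho> m)" "\<mu> = dirac_avg Y m t"
      unfolding topspace_A_top using A_setE[OF LC H LH] by blast
    then show "rho_tilde Y X \<rho> \<mu> \<in> topspace X" using rho_tilde_D[OF H HX LH t(1)] x0 by simp
  qed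
  fix O' assume O': "openin X O'"
  have eq: "{t \<in> topspace (conf_top Y \<rho> m). dirac_avg Y m t \<in> {\<mu> \<in> topspace (A_top Y X \<rho> m). rho_tilde Y X \<rho> \<mu> \<in> O'}}
        = {t \<in> topspace (conf_top Y \<rho> m). \<rho> (t 0) \<in> O'}"
    using rho_tilde_D[OF H HX LH] D_in_A[OF LC H LH] unfolding topspace_A_top by auto
  have "continuous_map (conf_top Y \<rho> m) X (\<lambda>t. \<rho> (t 0))"
    using continuous_map_compose[OF proj_cont[of 0 m Y \<rho>] local_homeo_continuous[OF LH]] by (simp add: o_def)
  then have op: "openin (conf_top Y \<rho> m) {t \<in> topspace (conf_top Y \<rho> m). \<rho> (t 0) \<in> O'}"
    using O' by (rule openin_continuous_map_preimage)
  show "openin (A_top Y X \<rho> m) {\<mu> \<in> topspace (A_top Y X \<rho> m). rho_tilde Y X \<rho> \<mu> \<in> O'}"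
    unfolding openin_A_top_iff[OF LC H LH]
  proof (intro conjI)
    show "{\<mu> \<in> topspace (A_top Y X \<rho> m). rho_tilde Y X \<rho> \<mu> \<in> O'} \<subseteq> A_set Y X \<rho> m"
      unfolding topspace_A_top by blast
    show "openin (conf_top Y \<rho> m) {t \<in> T Y \<rho> m. D Y m t \<in> {\<mu> \<in> topspace (A_top Y X \<rho> m). rho_tilde Y X \<rho> \<mu> \<in> O'}}"
      unfolding eq by (rule op)
  qed
qed

lemma part2:
  assumes LC: "locally_compact_space Y" and H: "Hausdorff_space Y" and HX: "Hausdorff_space X"
    and LH: "local_homeo Y X \<rho>"
  shows "local_homeo (A_top Y X \<rho> m) X (rho_tilde Y X \<rho>)"
  unfolding local_homeo_def
proof (intro conjI ballI)
  have rtc: "continuous_map (A_top Y X \<rho> m) X (rho_tilde Y X \<rho>)"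
    by (rule rho_tilde_continuous[OF LC H HX LH])
  then show "rho_tilde Y X \<rho> ` topspace (A_top Y X \<rho> m) \<subseteq> topspace X"
    by (rule continuous_map_image_subset_topspace)
  fix \<mu>0 assume "\<mu>0 \<in> topspace (A_top Y X \<rho> m)"
  then obtain t0 where t0: "t0 \<in> topspace (conf_top Y \<rho> m)" "\<mu>0 = dirac_avg Y m t0"
    unfolding topspace_A_top using A_setE[OF LC H LH] by blast
  have t0top: "\<And>i. i \<le> m \<Longrightarrow> t0 i \<in> topspace Y" using conf_topD(1)[OF t0(1)] by blast
  have "\<forall>i. \<exists>p. i \<le> m \<longrightarrow> openin Y (fst p) \<and> t0 i \<in> fst p \<and> openin X (\<rho> ` fst p) \<and>
          homeomorphic_maps (subtopology Y (fst p)) (subtopology X (\<rho> ` fst p)) \<rho> (snd p)"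
  proof
    fix i
    show "\<exists>p. i \<le> m \<longrightarrow> openin Y (fst p) \<and> t0 i \<in> fst p \<and> openin X (\<rho> ` fst p) \<and>
          homeomorphic_maps (subtopology Y (fst p)) (subtopology X (\<rho> ` fst p)) \<rho> (snd p)"
    proof (cases "i \<le> m")
      case True
      then obtain U where U: "openin Y U" "t0 i \<in> U" "openin X (\<rho> ` U)"
        "homeomorphic_map (subtopology Y U) (subtopology X (\<rho> ` U)) \<rho>"
        using LH t0top[OF True] unfolding local_homeo_def by blast
      then obtain g where "homeomorphic_maps (subtopology Y U) (subtopology X (\<rho> ` U)) \<rho> g"
        using homeomorphic_map_maps by blast
      then show ?thesis using U by (intro exI[of _ "(U, g)"]) simp
    qed simp
  qed
  then obtain P where P0: "\<forall>i. i \<le> m \<longrightarrow> openin Y (fst (P i)) \<and> t0 i \<in> fst (P i) \<and> openin X (\<rho> ` fst (P i)) \<and>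
          homeomorphic_maps (subtopology Y (fst (P i))) (subtopology X (\<rho> ` fst (P i))) \<rho> (snd (P i))"
    by (elim choice[THEN exE])
  define Wd where "Wd i = fst (P i)" for i
  define g where "g i = snd (P i)" for i
  have P: "openin Y (Wd i) \<and> t0 i \<in> Wd i \<and> openin X (\<rho> ` Wd i) \<and>
          homeomorphic_maps (subtopology Y (Wd i)) (subtopology X (\<rho> ` Wd i)) \<rho> (g i)" if "i \<le> m" for i
    using P0 that unfolding Wd_def g_def by blast
  have g_cont: "continuous_map (subtopology X (\<rho> ` Wd i)) (subtopology Y (Wd i)) (g i)" if "i \<le> m" for i
    using P[OF that] unfolding homeomorphic_maps_def by blast
  have ginv: "g i (\<rho> y) = y" if "i \<le> m" "y \<in> Wd i" "y \<in> topspace Y" for i y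
    using P[OF that(1)] that(2,3) unfolding homeomorphic_maps_def by simp
  have rho_hm: "homeomorphic_map (subtopology Y (Wd i)) (subtopology X (\<rho> ` Wd i)) \<rho>" if "i \<le> m" for i
    using P[OF that] homeomorphic_maps_imp_map by blast
  have "\<exists>N. \<forall>i\<le>m. openin Y (N i) \<and> t0 i \<in> N i \<and> (\<forall>j\<le>m. j \<noteq> i \<longrightarrow> N i \<inter> N j = {})"
    by (rule separate_points[OF H]) (use t0top conf_topD(2)[OF t0(1)] in auto)
  then obtain N where N0: "\<forall>i\<le>m. openin Y (N i) \<and> t0 i \<in> N i \<and> (\<forall>j\<le>m. j \<noteq> i \<longrightarrow> N i \<inter> N j = {})"
    by (elim exE)
  have N: "openin Y (N i) \<and> t0 i \<in> N i \<and> (\<forall>j\<le>m. j \<noteq> i \<longrightarrow> N i \<inter> N j = {})" if "i \<le> m" for i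
    using N0 that by simp
  define V where "V i = Wd i \<inter> N i" for i
  have Vo: "openin Y (V i)" "t0 i \<in> V i" "V i \<subseteq> Wd i" "V i \<subseteq> topspace Y" if "i \<le> m" for i
    using P[OF that] N[OF that] openin_subset unfolding V_def by auto
  have disj: "V i \<inter> V j = {}" if "i \<le> m" "j \<le> m" "i \<noteq> j" for i j
    using N[OF that(1)] that unfolding V_def by blast
  have rV: "openin X (\<rho> ` V i)" if i: "i \<le> m" for i
  proof -
    have "openin (subtopology Y (Wd i)) (Wd i \<inter> N i)"
      using N[OF i] by (intro openin_subtopology_Int2) blast
    then have "openin (subtopology X (\<rho> ` Wd i)) (\<rho> ` V i)"
      using homeomorphic_imp_open_map[OF rho_hm[OF i]] unfolding open_map_def V_def by blast
    then show ?thesis using P[OF i] openin_trans_full by blast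
  qed
  define Ox where "Ox = (\<Inter>i\<in>{..m}. \<rho> ` V i) \<inter> topspace X"
  have Oo: "openin X Ox" unfolding Ox_def by (rule openin_INT) (use rV in auto)
  have gV: "g i x \<in> V i \<and> \<rho> (g i x) = x" if x: "x \<in> Ox" and i: "i \<le> m" for x i
  proof -
    obtain v where v: "v \<in> V i" "x = \<rho> v" using x i unfolding Ox_def by blast
    have "g i x = v" using ginv[OF i, of v] v Vo[OF i] by blast
    then show ?thesis using v by simp
  qed
  define gx where "gx x = restrict (\<lambda>i. g i x) {..m}" for x
  have gxT: "gx x \<in> topspace (conf_top Y \<rho> m)" if x: "x \<in> Ox" for x
  proof (rule conf_topI[where x = x])
    show "gx x i \<in> topspace Y" if i: "i \<le> m" for i
    proof -
      have "g i x \<in> V i" using gV[OF x i] by blast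
      then show ?thesis using Vo(4)[OF i] i unfolding gx_def by auto
    qed
    show "gx x \<in> extensional {..m}" unfolding gx_def by simp
    show "\<And>i. i \<le> m \<Longrightarrow> \<rho> (gx x i) = x" using gV[OF x] unfolding gx_def by auto
    show "inj_on (gx x) {..m}"
    proof (rule inj_onI)
      fix i j assume ij: "i \<in> {..m}" "j \<in> {..m}" "gx x i = gx x j"
      then have "g i x = g j x" unfolding gx_def by simp
      then show "i = j" using gV[OF x] disj ij by (metis atMost_iff disjoint_iff)
    qed
  qed
  have gx_img: "gx x ` {..m} = (\<lambda>i. g i x) ` {..m}" for x unfolding gx_def by auto
  define Ud where "Ud = {\<mu> \<in> A_set Y X \<rho> m. \<forall>i\<le>m. phi Y \<rho> m \<mu> \<inter> V i \<noteq> {}}"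
  have preU: "{t \<in> topspace (conf_top Y \<rho> m). dirac_avg Y m t \<in> Ud} =
      {t \<in> topspace (conf_top Y \<rho> m). \<forall>i\<le>m. t ` {..m} \<inter> V i \<noteq> {}}"
    using phiD[OF LC H LH] D_in_A[OF LC H LH] unfolding Ud_def conf_class_def by auto
  have Uo: "openin (A_top Y X \<rho> m) Ud"
    unfolding openin_A_top_iff[OF LC H LH] preU
  proof (intro conjI)
    show "Ud \<subseteq> A_set Y X \<rho> m" unfolding Ud_def by blast
    show "openin (conf_top Y \<rho> m) {t \<in> topspace (conf_top Y \<rho> m). \<forall>i\<le>m. t ` {..m} \<inter> V i \<noteq> {}}"
    proof (subst openin_subopen, intro ballI)
      fix t assume t: "t \<in> {t \<in> topspace (conf_top Y \<rho> m). \<forall>i\<le>m. t ` {..m} \<inter> V i \<noteq> {}}"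
      have "\<forall>i. \<exists>j. i \<le> m \<longrightarrow> j \<le> m \<and> t j \<in> V i" using t by blast
      then obtain J where J: "\<forall>i. i \<le> m \<longrightarrow> J i \<le> m \<and> t (J i) \<in> V i" by (elim choice[THEN exE])
      let ?S = "\<Inter>i\<in>{..m}. {s \<in> topspace (conf_top Y \<rho> m). s (J i) \<in> V i}"
      have "openin (conf_top Y \<rho> m) ?S"
      proof (rule openin_INT2)
        fix i assume "i \<in> {..m}"
        then show "openin (conf_top Y \<rho> m) {s \<in> topspace (conf_top Y \<rho> m). s (J i) \<in> V i}"
          using J Vo by (intro openin_continuous_map_preimage[OF proj_cont]) auto
      qed auto
      moreover have "t \<in> ?S" using t J by auto
      moreover have "?S \<subseteq> {t \<in> topspace (conf_top Y \<rho> m). \<forall>i\<le>m. t ` {..m} \<inter> V i \<noteq> {}}"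
      proof
        fix s assume "s \<in> ?S"
        then have "s \<in> topspace (conf_top Y \<rho> m)" "\<forall>i\<le>m. s (J i) \<in> V i" by auto
        then show "s \<in> {t \<in> topspace (conf_top Y \<rho> m). \<forall>i\<le>m. t ` {..m} \<inter> V i \<noteq> {}}"
          using J by blast
      qed
      ultimately show "\<exists>T. openin (conf_top Y \<rho> m) T \<and> t \<in> T \<and> T \<subseteq> {t \<in> topspace (conf_top Y \<rho> m). \<forall>i\<le>m. t ` {..m} \<inter> V i \<noteq> {}}"
        by blast
    qed
  qed
  have mu0U: "\<mu>0 \<in> Ud"
    unfolding Ud_def using t0 phiD[OF LC H LH t0(1)] D_in_A[OF LC H LH t0(1)] Vo
    unfolding conf_class_def by blast
  have fromU: "rho_tilde Y X \<rho> \<mu> \<in> Ox \<and> dirac_avg Y m (gx (rho_tilde Y X \<rho> \<mu>)) = \<mu>" if mu: "\<mu> \<in> Ud" for \<mu>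
  proof -
    obtain t where t: "t \<in> topspace (conf_top Y \<rho> m)" "\<mu> = dirac_avg Y m t"
      using mu unfolding Ud_def using A_setE[OF LC H LH] by blast
    note tt = conf_topD[OF t(1)]
    have ex: "\<forall>i\<le>m. t ` {..m} \<inter> V i \<noteq> {}"
      using mu phiD[OF LC H LH t(1)] t(2) unfolding Ud_def conf_class_def by simp
    have "\<exists>\<sigma>. bij_betw \<sigma> {..m} {..m} \<and> (\<forall>i\<le>m. t (\<sigma> i) \<in> V i)"
      by (rule pigeon) (use disj ex in auto)
    then obtain \<sigma> where \<sigma>: "bij_betw \<sigma> {..m} {..m}" "\<forall>i\<le>m. t (\<sigma> i) \<in> V i" by blast
    define x where "x = \<rho> (t 0)"
    have rt: "rho_tilde Y X \<rho> \<mu> = x" unfolding x_def t(2) by (rule rho_tilde_D[OF H HX LH t(1)])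
    have sm: "\<sigma> i \<le> m" if "i \<le> m" for i using \<sigma>(1) that by (auto simp: bij_betw_def)
    have rs: "\<rho> (t (\<sigma> i)) = x" if "i \<le> m" for i unfolding x_def using tt(3)[OF sm[OF that], of 0] by simp
    have tg: "t (\<sigma> i) = g i x" if i: "i \<le> m" for i
    proof -
      have v: "t (\<sigma> i) \<in> V i" using \<sigma>(2) i by blast
      have "g i (\<rho> (t (\<sigma> i))) = t (\<sigma> i)" by (rule ginv[OF i]) (use v Vo(3,4)[OF i] in auto)
      then show ?thesis using rs[OF i] by simp
    qed
    have x0: "x \<in> topspace X" unfolding x_def using LH tt(1)[of 0] by (auto simp: local_homeo_def)
    have xO: "x \<in> Ox"
      unfolding Ox_def using x0 rs \<sigma>(2) by (auto intro!: image_eqI)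
    have "t ` {..m} = t ` (\<sigma> ` {..m})" using \<sigma>(1) by (simp add: bij_betw_def)
    also have "\<dots> = (\<lambda>i. t (\<sigma> i)) ` {..m}" by (simp add: image_comp)
    also have "\<dots> = (\<lambda>i. g i x) ` {..m}" using tg by auto
    also have "\<dots> = gx x ` {..m}" using gx_img by simp
    finally have "conf_class m t = conf_class m (gx x)" unfolding conf_class_def .
    then have "dirac_avg Y m (gx x) = dirac_avg Y m t" using D_eq_iff[OF LC H LH gxT[OF xO] t(1)] by simp
    then show ?thesis using rt xO t(2) by simp
  qed
  have fromO: "dirac_avg Y m (gx x) \<in> Ud \<and> rho_tilde Y X \<rho> (dirac_avg Y m (gx x)) = x" if x: "x \<in> Ox" for x
  proof
    have "phi Y \<rho> m (dirac_avg Y m (gx x)) = gx x ` {..m}"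
      using phiD[OF LC H LH gxT[OF x]] by (simp add: conf_class_def)
    moreover have "g i x \<in> gx x ` {..m} \<inter> V i" if "i \<le> m" for i
      using gV[OF x that] gx_img that by auto
    ultimately show "dirac_avg Y m (gx x) \<in> Ud"
      unfolding Ud_def using D_in_A[OF LC H LH gxT[OF x]] by blast
    have "rho_tilde Y X \<rho> (dirac_avg Y m (gx x)) = \<rho> (gx x 0)" by (rule rho_tilde_D[OF H HX LH gxT[OF x]])
    also have "\<dots> = x" using gV[OF x, of 0] unfolding gx_def by simp
    finally show "rho_tilde Y X \<rho> (dirac_avg Y m (gx x)) = x" .
  qed
  have img: "rho_tilde Y X \<rho> ` Ud = Ox"
  proof
    show "rho_tilde Y X \<rho> ` Ud \<subseteq> Ox" using fromU by blast
    show "Ox \<subseteq> rho_tilde Y X \<rho> ` Ud"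
    proof
      fix x assume "x \<in> Ox"
      then show "x \<in> rho_tilde Y X \<rho> ` Ud" using fromO by (metis image_eqI)
    qed
  qed
  have gx_cont: "continuous_map (subtopology X Ox) (conf_top Y \<rho> m) gx"
    unfolding conf_top_def continuous_map_in_subtopology
  proof (intro conjI)
    show "continuous_map (subtopology X Ox) (product_topology (\<lambda>i. Y) {..m}) gx"
      unfolding continuous_map_componentwise
    proof (intro conjI ballI)
      show "gx ` topspace (subtopology X Ox) \<subseteq> extensional {..m}" unfolding gx_def by auto
      fix k assume k: "k \<in> {..m}"
      have "Ox \<subseteq> \<rho> ` Wd k" using k Vo(3)[of k] unfolding Ox_def by blast
      moreover have "continuous_map (subtopology X (\<rho> ` Wd k)) Y (g k)"
        using g_cont[of k] k continuous_map_in_subtopology by auto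
      ultimately have "continuous_map (subtopology X Ox) Y (g k)"
        using continuous_map_from_subtopology_mono by blast
      moreover have "\<And>x. gx x k = g k x" using k unfolding gx_def by simp
      ultimately show "continuous_map (subtopology X Ox) Y (\<lambda>x. gx x k)" by simp
    qed
    show "gx \<in> topspace (subtopology X Ox) \<rightarrow> {t. inj_on t {..m} \<and> (\<forall>i\<le>m. \<forall>j\<le>m. \<rho> (t i) = \<rho> (t j))}"
    proof
      fix x assume "x \<in> topspace (subtopology X Ox)"
      then have "gx x \<in> topspace (conf_top Y \<rho> m)" using gxT by simp
      then show "gx x \<in> {t. inj_on t {..m} \<and> (\<forall>i\<le>m. \<forall>j\<le>m. \<rho> (t i) = \<rho> (t j))}"
        unfolding conf_top_iff by blast
    qed
  qed
  have G_cont: "continuous_map (subtopology X Ox) (subtopology (A_top Y X \<rho> m) Ud) (\<lambda>x. dirac_avg Y m (gx x))"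
    unfolding continuous_map_in_subtopology
  proof (intro conjI)
    show "continuous_map (subtopology X Ox) (A_top Y X \<rho> m) (\<lambda>x. dirac_avg Y m (gx x))"
      using continuous_map_compose[OF gx_cont D_continuous[OF H LH]] by (simp add: o_def)
    show "(\<lambda>x. dirac_avg Y m (gx x)) \<in> topspace (subtopology X Ox) \<rightarrow> Ud" using fromO by auto
  qed
  have rt_cont: "continuous_map (subtopology (A_top Y X \<rho> m) Ud) (subtopology X Ox) (rho_tilde Y X \<rho>)"
    unfolding continuous_map_in_subtopology
  proof (intro conjI)
    show "continuous_map (subtopology (A_top Y X \<rho> m) Ud) X (rho_tilde Y X \<rho>)"
      by (rule continuous_map_from_subtopology[OF rtc])
    show "rho_tilde Y X \<rho> \<in> topspace (subtopology (A_top Y X \<rho> m) Ud) \<rightarrow> Ox" using fromU by auto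
  qed
  have "homeomorphic_maps (subtopology (A_top Y X \<rho> m) Ud) (subtopology X Ox) (rho_tilde Y X \<rho>) (\<lambda>x. dirac_avg Y m (gx x))"
    unfolding homeomorphic_maps_def using rt_cont G_cont fromU fromO by auto
  then have "homeomorphic_map (subtopology (A_top Y X \<rho> m) Ud) (subtopology X (rho_tilde Y X \<rho> ` Ud)) (rho_tilde Y X \<rho>)"
    unfolding img by (rule homeomorphic_maps_imp_map)
  then show "\<exists>U. openin (A_top Y X \<rho> m) U \<and> \<mu>0 \<in> U \<and> openin X (rho_tilde Y X \<rho> ` U) \<and>
        homeomorphic_map (subtopology (A_top Y X \<rho> m) U) (subtopology X (rho_tilde Y X \<rho> ` U)) (rho_tilde Y X \<rho>)"
    using Uo mu0U Oo img by auto
qed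

theorem proposition3p14:
  fixes Y :: "'y topology" and X :: "'x topology" and \<rho> :: "'y \<Rightarrow> 'x" and m :: nat
  assumes "locally_compact_space Y" and "Hausdorff_space Y"
    and "locally_compact_space X" and "Hausdorff_space X"
    and "local_homeo Y X \<rho>"
  shows "homeomorphic_map (A_top Y X \<rho> m) (B_top Y \<rho> m) (phi Y \<rho> m) \<and>
         local_homeo (A_top Y X \<rho> m) X (rho_tilde Y X \<rho>) \<and>
         (\<forall>\<Delta>. X_simplicial_complex Y \<rho> \<Delta> \<and> H2 Y \<Delta> \<longrightarrow>
           closedin (A_top Y X \<rho> m) (A_set Y X \<rho> m \<inter> geom_real Y X \<rho> \<Delta>))"
  proof (intro conjI allI impI)
  show "homeomorphic_map (A_top Y X \<rho> m) (B_top Y \<rho> m) (phi Y \<rho> m)"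
    by (rule phi_homeo[OF assms(1,2,5)])
  show "local_homeo (A_top Y X \<rho> m) X (rho_tilde Y X \<rho>)"
    by (rule part2[OF assms(1,2,4,5)])
  fix \<Delta> assume "X_simplicial_complex Y \<rho> \<Delta> \<and> H2 Y \<Delta>"
  then show "closedin (A_top Y X \<rho> m) (A_set Y X \<rho> m \<inter> geom_real Y X \<rho> \<Delta>)"
    using part3[OF assms(1,2,5)] by blast
qed

end
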